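(* Let $M=\prod_{n\in\mathbb N}M_n$ be a product of connected (finite-dimensional) manifolds, with the product topology. Then every $f\in\mathcal C^\infty(M)$ is continuous.
   Context: The canonical $\mathcal C^\infty$ structure on a product $\prod_tM_t$ of manifolds: its structure curves are the maps $c:\mathbb R\to\prod_tM_t$ whose components $c_t:\mathbb R\to M_t$ are all smooth, and $\mathcal C^\infty(M)$ is the set of functions $f:M\to\mathbb R$ with $f\circ c\in C^\infty(\mathbb R,\mathbb R)$ for every structure curve $c$. *)

theory Defs
  imports "HOL-Analysis.Analysis"
begin

text \<open>Euclidean space R^d, realised as the coordinate subspace of nat => real
  (with the product topology, which restricts to the usual topology on it).\<close>

definition Rn :: "nat \<Rightarrow> (nat \<Rightarrow> real) set" where
  "Rn d = {x. \<forall>i\<ge>d. x i = 0}"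

definition Rn_top :: "nat \<Rightarrow> (nat \<Rightarrow> real) topology" where
  "Rn_top d = subtopology euclidean (Rn d)"

fun Ck :: "nat \<Rightarrow> nat \<Rightarrow> (nat \<Rightarrow> real) set \<Rightarrow> ((nat \<Rightarrow> real) \<Rightarrow> real) \<Rightarrow> bool" where
  "Ck d 0 V f = continuous_on V f"
| "Ck d (Suc k) V f = (continuous_on V f \<and>
     (\<forall>i<d. \<exists>g. (\<forall>x\<in>V. ((\<lambda>h. f (x(i := x i + h))) has_real_derivative g x) (at 0))
                 \<and> Ck d k V g))"

definition smooth_map_Rn :: "nat \<Rightarrow> nat \<Rightarrow> (nat \<Rightarrow> real) set \<Rightarrow> ((nat \<Rightarrow> real) \<Rightarrow> (nat \<Rightarrow> real)) \<Rightarrow> bool" where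
  "smooth_map_Rn d e V g \<longleftrightarrow> g ` V \<subseteq> Rn e \<and> (\<forall>j<e. \<forall>k. Ck d k V (\<lambda>x. g x j))"

fun Ck_real :: "nat \<Rightarrow> real set \<Rightarrow> (real \<Rightarrow> real) \<Rightarrow> bool" where
  "Ck_real 0 S g = continuous_on S g"
| "Ck_real (Suc k) S g = (continuous_on S g \<and>
     (\<exists>g'. (\<forall>x\<in>S. (g has_real_derivative g' x) (at x)) \<and> Ck_real k S g'))"

definition smooth_real_on :: "real set \<Rightarrow> (real \<Rightarrow> real) \<Rightarrow> bool" where
  "smooth_real_on S g \<longleftrightarrow> (\<forall>k. Ck_real k S g)"

definition is_chart :: "'a topology \<Rightarrow> nat \<Rightarrow> 'a set \<Rightarrow> ('a \<Rightarrow> nat \<Rightarrow> real) \<Rightarrow> bool" where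
  "is_chart T d U \<phi> \<longleftrightarrow> openin T U \<and> openin (Rn_top d) (\<phi> ` U) \<and>
     homeomorphic_map (subtopology T U) (subtopology (Rn_top d) (\<phi> ` U)) \<phi>"

definition smooth_manifold :: "'a topology \<Rightarrow> nat \<Rightarrow> ('a set \<times> ('a \<Rightarrow> nat \<Rightarrow> real)) set \<Rightarrow> bool" where
  "smooth_manifold T d A \<longleftrightarrow> Hausdorff_space T \<and> second_countable T \<and>
     (\<forall>(U, \<phi>)\<in>A. is_chart T d U \<phi>) \<and>
     \<Union>(fst ` A) = topspace T \<and>
     (\<forall>(U, \<phi>)\<in>A. \<forall>(U', \<psi>)\<in>A.
        smooth_map_Rn d d (\<phi> ` (U \<inter> U')) (\<psi> \<circ> inv_into U \<phi>))"

definition smooth_curve :: "'a topology \<Rightarrow> nat \<Rightarrow> ('a set \<times> ('a \<Rightarrow> nat \<Rightarrow> real)) set \<Rightarrow> (real \<Rightarrow> 'a) \<Rightarrow> bool" where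
  "smooth_curve T d A c \<longleftrightarrow> continuous_map euclideanreal T c \<and>
     (\<forall>(U, \<phi>)\<in>A. \<forall>j<d. smooth_real_on (c -` U) (\<lambda>s. \<phi> (c s) j))"

definition structure_curve :: "(nat \<Rightarrow> 'a topology) \<Rightarrow> (nat \<Rightarrow> nat) \<Rightarrow> (nat \<Rightarrow> ('a set \<times> ('a \<Rightarrow> nat \<Rightarrow> real)) set)
     \<Rightarrow> (real \<Rightarrow> nat \<Rightarrow> 'a) \<Rightarrow> bool" where
  "structure_curve T d A c \<longleftrightarrow> (\<forall>t. smooth_curve (T t) (d t) (A t) (\<lambda>s. c s t))"

definition Cinf_prod :: "(nat \<Rightarrow> 'a topology) \<Rightarrow> (nat \<Rightarrow> nat) \<Rightarrow> (nat \<Rightarrow> ('a set \<times> ('a \<Rightarrow> nat \<Rightarrow> real)) set)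
     \<Rightarrow> ((nat \<Rightarrow> 'a) \<Rightarrow> real) set" where
  "Cinf_prod T d A = {f. \<forall>c. structure_curve T d A c \<longrightarrow> smooth_real_on UNIV (f \<circ> c)}"

end

theory Submission
  imports Defs "HOL-Computational_Algebra.Polynomial"
begin
lemma Ck_real_down: "Ck_real (Suc k) S g \<Longrightarrow> Ck_real k S g"
proof (induction k arbitrary: g)
  case 0 then show ?case by simp
next
  case (Suc k) then show ?case by (metis Ck_real.simps(2))
qed

lemma Ck_real_cont: "Ck_real k S g \<Longrightarrow> continuous_on S g"
  by (cases k) auto

lemma Ck_real_subset: "Ck_real k S g \<Longrightarrow> T \<subseteq> S \<Longrightarrow> Ck_real k T g"
proof (induction k arbitrary: g)
  case 0 then show ?case by (auto intro: continuous_on_subset)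
next
  case (Suc k) then show ?case by (auto intro: continuous_on_subset)
qed

lemma Ck_real_cong: "open S \<Longrightarrow> (\<And>x. x \<in> S \<Longrightarrow> g x = h x) \<Longrightarrow> Ck_real k S g \<Longrightarrow> Ck_real k S h"
proof (induction k arbitrary: g h)
  case 0 then show ?case using continuous_on_cong by force
next
  case (Suc k)
  from Suc.prems obtain g' where g': "\<forall>x\<in>S. (g has_real_derivative g' x) (at x)" "Ck_real k S g'"
    and c: "continuous_on S g" by auto
  have "continuous_on S h" using c Suc.prems continuous_on_cong by force
  moreover have "\<forall>x\<in>S. (h has_real_derivative g' x) (at x)"
    using g' Suc.prems has_field_derivative_transform_within_open by blast
  ultimately show ?case using g' by auto
qed

lemma Ck_real_const: "Ck_real k S (\<lambda>_. c)"
proof (induction k arbitrary: c)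
  case 0 then show ?case by simp
next
  case (Suc k) then show ?case by (auto intro!: exI[of _ "\<lambda>_. 0"])
qed

lemma Ck_real_id: "Ck_real k S (\<lambda>x. x)"
proof (cases k)
  case 0 then show ?thesis by (simp add: continuous_on_id)
next
  case (Suc k) then show ?thesis by (auto intro!: exI[of _ "\<lambda>_. 1"] Ck_real_const simp: continuous_on_id)
qed

lemma Ck_real_add: "Ck_real k S f \<Longrightarrow> Ck_real k S g \<Longrightarrow> Ck_real k S (\<lambda>x. f x + g x)"
proof (induction k arbitrary: f g)
  case 0 then show ?case by (auto intro: continuous_intros)
next
  case (Suc k)
  from Suc.prems obtain f' g' where "\<forall>x\<in>S. (f has_real_derivative f' x) (at x)" "Ck_real k S f'"
    "\<forall>x\<in>S. (g has_real_derivative g' x) (at x)" "Ck_real k S g'" "continuous_on S f" "continuous_on S g" by auto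
  then show ?case using Suc.IH
    by (auto intro!: exI[of _ "\<lambda>x. f' x + g' x"] continuous_intros derivative_intros)
qed

lemma Ck_real_mult: "Ck_real k S f \<Longrightarrow> Ck_real k S g \<Longrightarrow> Ck_real k S (\<lambda>x. f x * g x)"
proof (induction k arbitrary: f g)
  case 0 then show ?case by (auto intro: continuous_intros)
next
  case (Suc k)
  from Suc.prems obtain f' g' where d: "\<forall>x\<in>S. (f has_real_derivative f' x) (at x)" "Ck_real k S f'"
    "\<forall>x\<in>S. (g has_real_derivative g' x) (at x)" "Ck_real k S g'" "continuous_on S f" "continuous_on S g" by auto
  have "Ck_real k S (\<lambda>x. f' x * g x + f x * g' x)"
    using Suc.IH Ck_real_add d Ck_real_down Suc.prems by metis
  then show ?case using d
    by (auto intro!: exI[of _ "\<lambda>x. f' x * g x + f x * g' x"] continuous_intros derivative_eq_intros)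
qed

lemma Ck_real_inverse: "Ck_real k S g \<Longrightarrow> (\<forall>x\<in>S. g x \<noteq> 0) \<Longrightarrow> Ck_real k S (\<lambda>x. inverse (g x))"
proof (induction k arbitrary: g)
  case 0 then show ?case by (auto intro: continuous_intros)
next
  case (Suc k)
  from Suc.prems obtain g' where d: 
    "\<forall>x\<in>S. (g has_real_derivative g' x) (at x)" "Ck_real k S g'" "continuous_on S g" by auto
  have i: "Ck_real k S (\<lambda>x. inverse (g x))" using Suc Ck_real_down by blast
  have m: "Ck_real k S (\<lambda>x. g' x * (inverse (g x) * inverse (g x)))"
    using Ck_real_mult[OF d(2) Ck_real_mult[OF i i]] .
  have "Ck_real k S (\<lambda>x. (-1) * (g' x * (inverse (g x) * inverse (g x))))"
    using Ck_real_mult[OF Ck_real_const m] .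
  then have *: "Ck_real k S (\<lambda>x. - (g' x * (inverse (g x) * inverse (g x))))" by simp
  have c: "continuous_on S (\<lambda>x. inverse (g x))"
    using d(3) Suc.prems(2) by (intro continuous_on_inverse) auto
  have "\<forall>x\<in>S. ((\<lambda>x. inverse (g x)) has_real_derivative - (g' x * (inverse (g x) * inverse (g x)))) (at x)"
  proof
    fix x assume "x \<in> S"
    then have "(g has_real_derivative g' x) (at x)" "g x \<noteq> 0" using d Suc.prems by auto
    then show "((\<lambda>x. inverse (g x)) has_real_derivative - (g' x * (inverse (g x) * inverse (g x)))) (at x)"
      using DERIV_inverse_fun by (simp add: power2_eq_square)
  qed
  then show ?case unfolding Ck_real.simps
    by (intro conjI[OF c] exI[of _ "\<lambda>x. - (g' x * (inverse (g x) * inverse (g x)))"]) (use * in blast)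
qed

lemma Ck_real_compose: "Ck_real k T f \<Longrightarrow> Ck_real k S g \<Longrightarrow> g ` S \<subseteq> T \<Longrightarrow> Ck_real k S (\<lambda>x. f (g x))"
proof (induction k arbitrary: f g)
  case 0 then show ?case by (auto intro: continuous_on_compose2)
next
  case (Suc k)
  from Suc.prems obtain f' g' where d: "\<forall>x\<in>T. (f has_real_derivative f' x) (at x)" "Ck_real k T f'"
    "\<forall>x\<in>S. (g has_real_derivative g' x) (at x)" "Ck_real k S g'" "continuous_on T f" "continuous_on S g" by auto
  have "Ck_real k S (\<lambda>x. f' (g x) * g' x)"
    using Suc.IH Ck_real_mult d Ck_real_down Suc.prems by metis
  moreover have "continuous_on S (\<lambda>x. f (g x))" using d Suc.prems by (auto intro: continuous_on_compose2)
  moreover have "\<forall>x\<in>S. ((\<lambda>x. f (g x)) has_real_derivative f' (g x) * g' x) (at x)"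
  proof
    fix x assume "x \<in> S"
    then show "((\<lambda>x. f (g x)) has_real_derivative f' (g x) * g' x) (at x)"
      using d Suc.prems by (intro DERIV_chain2) auto
  qed
  ultimately show ?case by auto
qed

lemma Ck_real_sum: "finite I \<Longrightarrow> (\<And>i. i \<in> I \<Longrightarrow> Ck_real k S (f i)) \<Longrightarrow> Ck_real k S (\<lambda>x. \<Sum>i\<in>I. f i x)"
  by (induction I rule: finite_induct) (auto intro: Ck_real_add Ck_real_const)

abbreviation Dn :: "nat \<Rightarrow> (real \<Rightarrow> real) \<Rightarrow> real \<Rightarrow> real" where
  "Dn m g \<equiv> (deriv ^^ m) g"

lemma Dn_Suc: "Dn (Suc m) g = deriv (Dn m g)" by simp

lemma Dn_Suc': "Dn (Suc m) g = Dn m (deriv g)"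
  by (simp add: funpow_Suc_right del: funpow.simps)

lemma Ck_real_iff_Dn:
  assumes "open S"
  shows "Ck_real k S g \<longleftrightarrow> (\<forall>m<k. \<forall>x\<in>S. (Dn m g has_real_derivative Dn (Suc m) g x) (at x)) \<and> continuous_on S (Dn k g)"
proof (induction k arbitrary: g)
  case 0 then show ?case by simp
next
  case (Suc k)
  show ?case
  proof
    assume "Ck_real (Suc k) S g"
    then obtain g' where c: "continuous_on S g" and d: "\<forall>x\<in>S. (g has_real_derivative g' x) (at x)"
      and g': "Ck_real k S g'" by auto
    have "g' x = deriv g x" if "x \<in> S" for x
      using d that DERIV_imp_deriv by (metis (no_types))
    then have "Ck_real k S (deriv g)"
      using Ck_real_cong[OF assms _ g'] by blast
    then have ih: "(\<forall>m<k. \<forall>x\<in>S. (Dn m (deriv g) has_real_derivative Dn (Suc m) (deriv g) x) (at x)) \<and> continuous_on S (Dn k (deriv g))"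
      using Suc.IH by blast
    have "\<forall>m<Suc k. \<forall>x\<in>S. (Dn m g has_real_derivative Dn (Suc m) g x) (at x)"
    proof (intro allI impI ballI)
      fix m x assume m: "m < Suc k" and x: "x \<in> S"
      show "(Dn m g has_real_derivative Dn (Suc m) g x) (at x)"
      proof (cases m)
        case 0
        have "(g has_real_derivative g' x) (at x)" using d x by blast
        moreover then have "deriv g x = g' x" by (rule DERIV_imp_deriv)
        ultimately show ?thesis using 0 by simp
      next
        case (Suc m')
        have "m' < k" using m Suc by simp
        then have *: "(Dn m' (deriv g) has_real_derivative Dn (Suc m') (deriv g) x) (at x)" using ih x by blast
        have eqs: "Dn (Suc m') g = Dn m' (deriv g)" "Dn (Suc (Suc m')) g = Dn (Suc m') (deriv g)"
          by (rule Dn_Suc')+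
        show ?thesis unfolding Suc using * by (simp only: eqs)
      qed
    qed
    moreover have "continuous_on S (Dn (Suc k) g)" using ih by (simp only: Dn_Suc')
    ultimately show "(\<forall>m<Suc k. \<forall>x\<in>S. (Dn m g has_real_derivative Dn (Suc m) g x) (at x)) \<and> continuous_on S (Dn (Suc k) g)"
      by blast
  next
    assume r: "(\<forall>m<Suc k. \<forall>x\<in>S. (Dn m g has_real_derivative Dn (Suc m) g x) (at x)) \<and> continuous_on S (Dn (Suc k) g)"
    have d: "\<forall>x\<in>S. (g has_real_derivative deriv g x) (at x)"
    proof
      fix x assume "x \<in> S"
      then have "(Dn 0 g has_real_derivative Dn (Suc 0) g x) (at x)" using r by blast
      then show "(g has_real_derivative deriv g x) (at x)" by simp
    qed
    then have c: "continuous_on S g"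
      by (meson DERIV_isCont continuous_at_imp_continuous_on)
    have "(\<forall>m<k. \<forall>x\<in>S. (Dn m (deriv g) has_real_derivative Dn (Suc m) (deriv g) x) (at x)) \<and> continuous_on S (Dn k (deriv g))"
    proof -
      have "\<forall>m<k. \<forall>x\<in>S. (Dn (Suc m) g has_real_derivative Dn (Suc (Suc m)) g x) (at x)"
        using r Suc_less_eq by blast
      then show ?thesis using r by (simp only: Dn_Suc')
    qed
    then have "Ck_real k S (deriv g)" using Suc.IH by blast
    then show "Ck_real (Suc k) S g" unfolding Ck_real.simps using c d by blast
  qed
qed

lemma smooth_iff_Dn:
  assumes "open S"
  shows "smooth_real_on S g \<longleftrightarrow> (\<forall>m. \<forall>x\<in>S. (Dn m g has_real_derivative Dn (Suc m) g x) (at x))"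
proof
  assume "smooth_real_on S g"
  then show "\<forall>m. \<forall>x\<in>S. (Dn m g has_real_derivative Dn (Suc m) g x) (at x)"
    unfolding smooth_real_on_def using Ck_real_iff_Dn[OF assms] by (meson lessI)
next
  assume r: "\<forall>m. \<forall>x\<in>S. (Dn m g has_real_derivative Dn (Suc m) g x) (at x)"
  then have "continuous_on S (Dn k g)" for k
    by (meson DERIV_isCont continuous_at_imp_continuous_on)
  then show "smooth_real_on S g"
    unfolding smooth_real_on_def using Ck_real_iff_Dn[OF assms] r by blast
qed

lemma smooth_local:
  assumes "open S" "\<And>x. x \<in> S \<Longrightarrow> \<exists>N. open N \<and> x \<in> N \<and> smooth_real_on N g"
  shows "smooth_real_on S g"
  unfolding smooth_iff_Dn[OF assms(1)]
proof (intro allI ballI)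
  fix m x assume "x \<in> S"
  then obtain N where "open N" "x \<in> N" "smooth_real_on N g" using assms by blast
  then show "(Dn m g has_real_derivative Dn (Suc m) g x) (at x)"
    using smooth_iff_Dn by blast
qed

lemma smooth_subset: "smooth_real_on S g \<Longrightarrow> T \<subseteq> S \<Longrightarrow> smooth_real_on T g"
  unfolding smooth_real_on_def using Ck_real_subset by blast

lemma smooth_cong: "open S \<Longrightarrow> (\<And>x. x \<in> S \<Longrightarrow> g x = h x) \<Longrightarrow> smooth_real_on S g \<Longrightarrow> smooth_real_on S h"
  unfolding smooth_real_on_def using Ck_real_cong by blast

lemma smooth_const: "smooth_real_on S (\<lambda>_. c)"
  unfolding smooth_real_on_def using Ck_real_const by blast
lemma smooth_id: "smooth_real_on S (\<lambda>x. x)"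
  unfolding smooth_real_on_def using Ck_real_id by blast
lemma smooth_add: "smooth_real_on S f \<Longrightarrow> smooth_real_on S g \<Longrightarrow> smooth_real_on S (\<lambda>x. f x + g x)"
  unfolding smooth_real_on_def using Ck_real_add by blast
lemma smooth_mult: "smooth_real_on S f \<Longrightarrow> smooth_real_on S g \<Longrightarrow> smooth_real_on S (\<lambda>x. f x * g x)"
  unfolding smooth_real_on_def using Ck_real_mult by blast
lemma smooth_inverse: "smooth_real_on S g \<Longrightarrow> (\<forall>x\<in>S. g x \<noteq> 0) \<Longrightarrow> smooth_real_on S (\<lambda>x. inverse (g x))"
  unfolding smooth_real_on_def using Ck_real_inverse by blast
lemma smooth_compose: "smooth_real_on T f \<Longrightarrow> smooth_real_on S g \<Longrightarrow> g ` S \<subseteq> T \<Longrightarrow> smooth_real_on S (\<lambda>x. f (g x))"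
  unfolding smooth_real_on_def using Ck_real_compose by blast
lemma smooth_sum: "finite I \<Longrightarrow> (\<And>i. i \<in> I \<Longrightarrow> smooth_real_on S (f i)) \<Longrightarrow> smooth_real_on S (\<lambda>x. \<Sum>i\<in>I. f i x)"
  unfolding smooth_real_on_def using Ck_real_sum by blast
lemma smooth_cont: "smooth_real_on S g \<Longrightarrow> continuous_on S g"
  unfolding smooth_real_on_def by (metis Ck_real.simps(1))

lemma smooth_affine: "smooth_real_on UNIV f \<Longrightarrow> smooth_real_on S (\<lambda>x. f (a * x + b))"
proof -
  assume f: "smooth_real_on UNIV f"
  have "smooth_real_on S (\<lambda>x. a * x + b)"
    by (intro smooth_add smooth_mult smooth_const smooth_id)
  then show ?thesis using smooth_compose[OF f] by blast
qed

lemma Dn_local: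
  assumes "open N" "\<And>x. x \<in> N \<Longrightarrow> g x = h x" "x \<in> N"
  shows "Dn m g x = Dn m h x"
  using assms(3)
proof (induction m arbitrary: x)
  case 0 then show ?case using assms by simp
next
  case (Suc m)
  have "eventually (\<lambda>y. Dn m g y = Dn m h y) (nhds x)"
    using Suc assms(1) eventually_nhds by blast
  then show ?case by (simp add: deriv_cong_ev)
qed

lemma Dn_const: "Dn (Suc m) (\<lambda>_. c) x = 0"
proof (induction m arbitrary: c)
  case 0 then show ?case by simp
next
  case (Suc m)
  have "Dn (Suc (Suc m)) (\<lambda>_. c) = Dn (Suc m) (deriv (\<lambda>_. c))" by (rule Dn_Suc')
  also have "deriv (\<lambda>_. c) = (\<lambda>_. 0)" by auto
  finally show ?case using Suc by simp
qed

lemma flat0: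
  fixes u v :: "real \<Rightarrow> real"
  assumes "a > 0" "\<And>s. s \<le> 0 \<Longrightarrow> u s = 0"
    and d: "\<And>x. 0 < x \<Longrightarrow> x < a \<Longrightarrow> (u has_real_derivative v x) (at x)"
    and lu: "(u \<longlongrightarrow> 0) (at_right 0)" and lv: "(v \<longlongrightarrow> 0) (at_right 0)"
  shows "(u has_real_derivative 0) (at 0)"
  unfolding DERIV_def
proof (rule filterlim_split_at_real)
  have "eventually (\<lambda>h. 0 = (u (0 + h) - u 0) / h) (at_left (0::real))"
    unfolding eventually_at_left_field using assms(2) by (intro exI[of _ "-1"]) auto
  then show "((\<lambda>h. (u (0 + h) - u 0) / h) \<longlongrightarrow> 0) (at_left 0)"
    by (rule Lim_transform_eventually[OF tendsto_const])
next
  show "((\<lambda>h. (u (0 + h) - u 0) / h) \<longlongrightarrow> 0) (at_right 0)"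
    unfolding tendsto_iff
  proof (intro allI impI)
    fix e :: real assume e: "e > 0"
    from lv[unfolded tendsto_iff, rule_format, OF e]
    obtain b where b: "b > 0" "\<And>y. 0 < y \<Longrightarrow> y < b \<Longrightarrow> \<bar>v y\<bar> < e"
      unfolding eventually_at_right_field by auto
    show "eventually (\<lambda>h. dist ((u (0 + h) - u 0) / h) 0 < e) (at_right 0)"
      unfolding eventually_at_right_field
    proof (intro exI[of _ "min a b"] conjI allI impI)
      show "0 < min a b" using b assms by simp
      fix h :: real assume h: "0 < h" "h < min a b"
      have cont: "continuous_on {0..h} u"
      proof -
        have "continuous (at x within {0..h}) u" if "x \<in> {0..h}" for x
        proof (cases "x = 0")
          case True
          have u0: "u 0 = 0" using assms(2)[of 0] by simp
          have "at (0::real) within {0..h} = at_right 0" using at_within_Icc_at_right h(1) by blast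
          then have "(u \<longlongrightarrow> u 0) (at 0 within {0..h})"
            using lu u0 by simp
          then show ?thesis using True continuous_within by blast
        next
          case False
          then have "(u has_real_derivative v x) (at x)" using d that h by auto
          then show ?thesis
            by (meson DERIV_isCont continuous_at_imp_continuous_at_within)
        qed
        then show ?thesis using continuous_on_eq_continuous_within by blast
      qed
      obtain l z where z: "0 < z" "z < h" "(u has_real_derivative l) (at z)" "u h - u 0 = (h - 0) * l"
      proof -
        have "u differentiable (at x)" if "0 < x" "x < h" for x
        proof -
          have "(u has_real_derivative v x) (at x)" using d that h by auto
          then show ?thesis unfolding real_differentiable_def by blast
        qed
        then show ?thesis using MVT[OF h(1) cont] that by blast
      qed
      have za: "z < a" using z h by linarith
      have "l = v z" using DERIV_unique[OF z(3) d[OF z(1) za]] .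
      then have "(u (0 + h) - u 0) / h = v z" using z(4) h(1) by simp
      moreover have "\<bar>v z\<bar> < e" using b(2)[of z] z h by linarith
      ultimately show "dist ((u (0 + h) - u 0) / h) 0 < e" by (simp add: dist_real_def)
    qed
  qed
qed

lemma flat:
  fixes g :: "real \<Rightarrow> real"
  assumes a: "a > 0" and z: "\<And>s. s \<le> 0 \<Longrightarrow> g s = 0"
    and sm: "smooth_real_on {0<..<a} g"
    and lim: "\<And>m. (Dn m g \<longlongrightarrow> 0) (at_right 0)"
  shows "smooth_real_on {..<a} g"
proof -
  have D: "\<And>m x. 0 < x \<Longrightarrow> x < a \<Longrightarrow> (Dn m g has_real_derivative Dn (Suc m) g x) (at x)"
    using sm smooth_iff_Dn[of "{0<..<a}"] by auto
  have P: "\<forall>s\<le>0. Dn m g s = 0 \<and> (Dn m g has_real_derivative 0) (at s)" for m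
  proof (induction m)
    case 0
    show ?case
    proof (intro allI impI conjI)
      fix s :: real assume s: "s \<le> 0"
      then show "Dn 0 g s = 0" using z by simp
      show "(Dn 0 g has_real_derivative 0) (at s)"
      proof (cases "s = 0")
        case True
        then show ?thesis using flat0[OF a, of "Dn 0 g" "Dn 1 g"] z D[of _ 0] lim[of 0] lim[of 1] by auto
      next
        case False
        have "((\<lambda>_. 0) has_real_derivative 0) (at s)" by simp
        then show ?thesis
          by (rule has_field_derivative_transform_within_open[of _ _ _ "{..<0}"])
             (use s False z in auto)
      qed
    qed
  next
    case (Suc m)
    have zz: "Dn (Suc m) g s = 0" if "s \<le> 0" for s
      using Suc that DERIV_imp_deriv by (metis Dn_Suc)
    show ?case
    proof (intro allI impI conjI)
      fix s :: real assume s: "s \<le> 0"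
      then show "Dn (Suc m) g s = 0" using zz by simp
      show "(Dn (Suc m) g has_real_derivative 0) (at s)"
      proof (cases "s = 0")
        case True
        then show ?thesis using flat0[OF a, of "Dn (Suc m) g" "Dn (Suc (Suc m)) g"] zz D[of _ "Suc m"] lim[of "Suc m"] lim[of "Suc (Suc m)"] by auto
      next
        case False
        have "((\<lambda>_. 0) has_real_derivative 0) (at s)" by simp
        then show ?thesis
          by (rule has_field_derivative_transform_within_open[of _ _ _ "{..<0}"])
             (use s False zz in auto)
      qed
    qed
  qed
  show ?thesis unfolding smooth_iff_Dn[OF open_lessThan]
  proof (intro allI ballI)
    fix m x assume x: "x \<in> {..<a}"
    show "(Dn m g has_real_derivative Dn (Suc m) g x) (at x)"
    proof (cases "x \<le> 0")
      case True
      have e: "Dn (Suc m) g x = 0" using P[of "Suc m"] True by blast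
      have "(Dn m g has_real_derivative 0) (at x)" using P[of m] True by blast
      then show ?thesis unfolding e .
    next
      case False
      then show ?thesis using D[of x m] x by simp
    qed
  qed
qed

definition hflat :: "real \<Rightarrow> real" where
  "hflat x = (if x \<le> 0 then 0 else exp (- inverse x))"

lemma poly_exp_lim: "((\<lambda>u. poly p u * exp (- u)) \<longlongrightarrow> (0::real)) at_top"
proof -
  have "((\<lambda>u. \<Sum>i\<le>degree p. coeff p i * (u ^ i / exp u)) \<longlongrightarrow> (0::real)) at_top"
    by (intro tendsto_null_sum tendsto_mult_right_zero tendsto_power_div_exp_0)
  moreover have "(\<Sum>i\<le>degree p. coeff p i * (u ^ i / exp u)) = poly p u * exp (- u)" for u :: real
  proof -
    have "(\<Sum>i\<le>degree p. coeff p i * (u ^ i / exp u)) = (\<Sum>i\<le>degree p. coeff p i * u ^ i) / exp u"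
      by (simp add: sum_divide_distrib)
    also have "\<dots> = poly p u * exp (- u)" by (simp add: poly_altdef exp_minus divide_inverse)
    finally show ?thesis .
  qed
  ultimately show ?thesis by simp
qed

lemma poly_exp_lim0: "((\<lambda>s. poly p (inverse s) * exp (- inverse s)) \<longlongrightarrow> (0::real)) (at_right 0)"
  using filterlim_compose[OF poly_exp_lim filterlim_inverse_at_top_right] by simp

lemma hflat_Dn:
  "\<exists>p. \<forall>s>0. Dn m hflat s = poly p (inverse s) * exp (- inverse s)"
proof (induction m)
  case 0
  show ?case by (intro exI[of _ "[:1:]"]) (simp add: hflat_def)
next
  case (Suc m)
  then obtain p where p: "\<And>s. s > 0 \<Longrightarrow> Dn m hflat s = poly p (inverse s) * exp (- inverse s)" by blast
  define q where "q = [:0, 0, 1:] * (p - pderiv p)"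
  have "Dn (Suc m) hflat s = poly q (inverse s) * exp (- inverse s)" if s: "s > 0" for s
  proof -
    have "((\<lambda>s. poly p (inverse s) * exp (- inverse s)) has_real_derivative
       poly q (inverse s) * exp (- inverse s)) (at s)"
      using s
      by (auto intro!: derivative_eq_intros DERIV_chain2[OF poly_DERIV]
          simp: q_def field_simps power2_eq_square)
    then have "(Dn m hflat has_real_derivative poly q (inverse s) * exp (- inverse s)) (at s)"
      by (rule has_field_derivative_transform_within_open[of _ _ _ "{0<..}"]) (use s p in auto)
    then show ?thesis by (simp add: DERIV_imp_deriv)
  qed
  then show ?case by blast
qed

lemma hflat_smooth_pos: "smooth_real_on {0<..} hflat"
  unfolding smooth_iff_Dn[OF open_greaterThan]
proof (intro allI ballI)
  fix m and s :: real assume "s \<in> {0<..}"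
  then have s: "s > 0" by simp
  obtain p where p: "\<And>s. s > 0 \<Longrightarrow> Dn m hflat s = poly p (inverse s) * exp (- inverse s)"
    using hflat_Dn by blast
  obtain q where q: "\<And>s. s > 0 \<Longrightarrow> Dn (Suc m) hflat s = poly q (inverse s) * exp (- inverse s)"
    using hflat_Dn by blast
  have "((\<lambda>s. poly p (inverse s) * exp (- inverse s)) has_real_derivative
       deriv (\<lambda>s. poly p (inverse s) * exp (- inverse s)) s) (at s)"
    using s by (intro DERIV_deriv_iff_real_differentiable[THEN iffD2])
      (auto intro!: derivative_eq_intros DERIV_chain2[OF poly_DERIV] simp: real_differentiable_def)
  moreover have "deriv (\<lambda>s. poly p (inverse s) * exp (- inverse s)) s = Dn (Suc m) hflat s"
  proof -
    have "eventually (\<lambda>y. poly p (inverse y) * exp (- inverse y) = Dn m hflat y) (nhds s)"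
      using s p eventually_nhds by (intro eventually_nhds_in_open[of "{0<..}", THEN eventually_mono]) auto
    then show ?thesis by (simp add: deriv_cong_ev)
  qed
  ultimately have "((\<lambda>s. poly p (inverse s) * exp (- inverse s)) has_real_derivative Dn (Suc m) hflat s) (at s)"
    by simp
  then show "(Dn m hflat has_real_derivative Dn (Suc m) hflat s) (at s)"
    by (rule has_field_derivative_transform_within_open[of _ _ _ "{0<..}"]) (use s p in auto)
qed

lemma hflat_smooth: "smooth_real_on UNIV hflat"
proof (rule smooth_local[OF open_UNIV])
  fix x :: real
  have f: "smooth_real_on {..<1} hflat"
  proof (rule flat)
    show "smooth_real_on {0<..<1} hflat" by (rule smooth_subset[OF hflat_smooth_pos]) auto
    fix m
    obtain p where p: "\<And>s. s > 0 \<Longrightarrow> Dn m hflat s = poly p (inverse s) * exp (- inverse s)"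
      using hflat_Dn by blast
    have "eventually (\<lambda>s. poly p (inverse s) * exp (- inverse s) = Dn m hflat s) (at_right 0)"
      unfolding eventually_at_right_field using p by (intro exI[of _ 1]) auto
    then show "(Dn m hflat \<longlongrightarrow> 0) (at_right 0)"
      using Lim_transform_eventually[OF poly_exp_lim0] by blast
  qed (auto simp: hflat_def)
  show "\<exists>N. open N \<and> x \<in> N \<and> smooth_real_on N hflat"
  proof (cases "x < 1")
    case True then show ?thesis using f by (intro exI[of _ "{..<1}"]) auto
  next
    case False then show ?thesis using hflat_smooth_pos by (intro exI[of _ "{0<..}"]) auto
  qed
qed

lemma hflat_nonneg: "hflat x \<ge> 0" by (simp add: hflat_def)
lemma hflat_pos: "x > 0 \<Longrightarrow> hflat x > 0" by (simp add: hflat_def)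
lemma hflat_zero: "x \<le> 0 \<Longrightarrow> hflat x = 0" by (simp add: hflat_def)

definition beta :: "real \<Rightarrow> real" where
  "beta x = hflat (3 * x - 1) / (hflat (3 * x - 1) + hflat (2 - 3 * x))"

lemma beta_den_pos: "hflat (3 * x - 1) + hflat (2 - 3 * x) > 0"
proof (cases "3 * x - 1 > 0")
  case True then show ?thesis using hflat_pos[of "3*x-1"] hflat_nonneg[of "2 - 3*x"] by linarith
next
  case False then have "2 - 3 * x > 0" by linarith
  then show ?thesis using hflat_pos[of "2 - 3*x"] hflat_nonneg[of "3*x-1"] by linarith
qed

lemma beta_smooth: "smooth_real_on S beta"
proof -
  have a: "smooth_real_on S (\<lambda>x. hflat (3 * x + (-1)))" by (rule smooth_affine[OF hflat_smooth])
  have b: "smooth_real_on S (\<lambda>x. hflat ((-3) * x + 2))" by (rule smooth_affine[OF hflat_smooth])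
  have "smooth_real_on S (\<lambda>x. hflat (3 * x + (-1)) * inverse (hflat (3 * x + (-1)) + hflat ((-3) * x + 2)))"
  proof (intro smooth_mult a smooth_inverse smooth_add b ballI)
    fix x show "hflat (3 * x + -1) + hflat (- 3 * x + 2) \<noteq> 0"
      using beta_den_pos[of x] by (simp add: algebra_simps)
  qed
  then show ?thesis unfolding beta_def by (simp add: divide_inverse algebra_simps)
qed

lemma beta_0: "x \<le> 1/3 \<Longrightarrow> beta x = 0"
  by (simp add: beta_def hflat_zero)

lemma beta_1: "x \<ge> 2/3 \<Longrightarrow> beta x = 1"
  using beta_den_pos[of x] by (simp add: beta_def hflat_zero)

lemma beta_range: "0 \<le> beta x \<and> beta x \<le> 1"
  using beta_den_pos[of x] hflat_nonneg[of "3*x-1"] hflat_nonneg[of "2-3*x"]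
  by (simp add: beta_def divide_le_eq_1)

lemma Dn_const_eq: "Dn m (\<lambda>_. c) x = Dn m (\<lambda>_. c) y"
proof (cases m)
  case 0 then show ?thesis by simp
next
  case (Suc n) then show ?thesis using Dn_const[of n c] by metis
qed

lemma beta_Dn_bound: "\<exists>B. \<forall>x. \<bar>Dn m beta x\<bar> \<le> B"
proof -
  have D: "\<And>x. (Dn m beta has_real_derivative Dn (Suc m) beta x) (at x)"
    using beta_smooth[of UNIV] smooth_iff_Dn[of UNIV] by auto
  then have "continuous_on {0..1} (Dn m beta)"
    by (meson DERIV_isCont continuous_at_imp_continuous_on)
  then have "compact (Dn m beta ` {0..1})" by (rule compact_continuous_image) simp
  then obtain B where B: "\<And>y. y \<in> Dn m beta ` {0..1} \<Longrightarrow> norm y \<le> B"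
    using compact_imp_bounded bounded_iff by metis
  have "\<bar>Dn m beta x\<bar> \<le> B" for x
  proof -
    consider "x < 0" | "x \<in> {0..1}" | "x > 1" by force
    then show ?thesis
    proof cases
      case 1
      have "Dn m beta x = Dn m beta 0"
        using Dn_local[of "{..<1/3}" beta "\<lambda>_. 0" x m] Dn_local[of "{..<1/3}" beta "\<lambda>_. 0" 0 m] 1 beta_0
          Dn_const_eq[of m 0 x 0] by auto
      then show ?thesis using B[of "Dn m beta 0"] by auto
    next
      case 2 then show ?thesis using B by auto
    next
      case 3
      have "Dn m beta x = Dn m beta 1"
        using Dn_local[of "{2/3<..}" beta "\<lambda>_. 1" x m] Dn_local[of "{2/3<..}" beta "\<lambda>_. 1" 1 m] 3 beta_1
          Dn_const_eq[of m 1 x 1] by auto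
      then show ?thesis using B[of "Dn m beta 1"] by auto
    qed
  qed
  then show ?thesis by blast
qed

lemma finite_pos_min:
  assumes "\<And>i. i < (d::nat) \<Longrightarrow> (R i :: real) > 0"
  shows "\<exists>\<rho>>0. \<forall>i<d. \<rho> \<le> R i"
  using assms
proof (induction d)
  case 0 then show ?case by (intro exI[of _ 1]) auto
next
  case (Suc d)
  then obtain \<rho> where "\<rho> > 0" "\<forall>i<d. \<rho> \<le> R i" by auto
  then show ?case using Suc.prems[of d]
    by (intro exI[of _ "min \<rho> (R d)"]) (auto simp: less_Suc_eq)
qed

lemma open_box_Rn:
  assumes "open Op" "z \<in> Op" "z \<in> Rn d"
  shows "\<exists>\<rho>>0. \<forall>w\<in>Rn d. (\<forall>j<d. \<bar>w j - z j\<bar> < \<rho>) \<longrightarrow> w \<in> Op"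
proof -
  have "openin (product_topology (\<lambda>i. euclidean) UNIV) Op" using assms(1) by (simp add: open_fun_def)
  from product_topology_open_contains_basis[OF this assms(2)]
  obtain X where X: "z \<in> (\<Pi>\<^sub>E i\<in>UNIV. X i)" "\<And>i. open (X i)" "(\<Pi>\<^sub>E i\<in>UNIV. X i) \<subseteq> Op"
    by auto
  have "\<forall>i. \<exists>r. i < d \<longrightarrow> r > 0 \<and> ball (z i) r \<subseteq> X i"
    using X(1,2) open_contains_ball by (metis PiE_iff UNIV_I)
  then obtain R where R: "\<And>i. i < d \<Longrightarrow> R i > 0 \<and> ball (z i) (R i) \<subseteq> X i" by metis
  obtain \<rho> where \<rho>: "\<rho> > 0" "\<forall>i<d. \<rho> \<le> R i" using finite_pos_min[of d R] R by blast
  have "w \<in> Op" if w: "w \<in> Rn d" "\<forall>j<d. \<bar>w j - z j\<bar> < \<rho>" for w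
  proof -
    have "w i \<in> X i" for i
    proof (cases "i < d")
      case True
      then have "w i \<in> ball (z i) (R i)" using w \<rho> by (force simp: dist_real_def)
      then show ?thesis using R True by blast
    next
      case False
      then have "w i = z i" using w assms(3) by (simp add: Rn_def)
      then show ?thesis using X(1) by auto
    qed
    then have "w \<in> (\<Pi>\<^sub>E i\<in>UNIV. X i)" by auto
    then show ?thesis using X(3) by blast
  qed
  then show ?thesis using \<rho> by blast
qed

lemma topspace_Rn_top [simp]: "topspace (Rn_top d) = Rn d"
  by (simp add: Rn_top_def)

lemma openin_Rn_box:
  assumes "openin (Rn_top d) V" "z \<in> V"
  shows "\<exists>\<rho>>0. \<forall>w\<in>Rn d. (\<forall>j<d. \<bar>w j - z j\<bar> < \<rho>) \<longrightarrow> w \<in> V"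
proof -
  obtain Op where O: "open Op" "V = Op \<inter> Rn d"
    using assms(1) unfolding Rn_top_def openin_subtopology by auto
  then show ?thesis using open_box_Rn[of Op z d] assms(2) by blast
qed

lemma openin_Rn_subset: "openin (Rn_top d) V \<Longrightarrow> V \<subseteq> Rn d"
  using openin_subset by fastforce

lemma cont_box:
  fixes g :: "(nat \<Rightarrow> real) \<Rightarrow> real"
  assumes "continuous_on V g" "z \<in> V" "V \<subseteq> Rn d" "e > 0"
  shows "\<exists>\<rho>>0. \<forall>w\<in>V. (\<forall>j<d. \<bar>w j - z j\<bar> < \<rho>) \<longrightarrow> \<bar>g w - g z\<bar> < e"
proof -
  obtain A where A: "open A" "A \<inter> V = g -` ball (g z) e \<inter> V"
    using assms(1) unfolding continuous_on_open_invariant by (meson open_ball)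
  have "z \<in> A" using A assms by auto
  then obtain \<rho> where \<rho>: "\<rho> > 0" "\<forall>w\<in>Rn d. (\<forall>j<d. \<bar>w j - z j\<bar> < \<rho>) \<longrightarrow> w \<in> A"
    using open_box_Rn[OF A(1)] assms by blast
  have "\<bar>g w - g z\<bar> < e" if "w \<in> V" "\<forall>j<d. \<bar>w j - z j\<bar> < \<rho>" for w
  proof -
    have "w \<in> A \<inter> V" using \<rho> that assms(3) by blast
    then have "g w \<in> ball (g z) e" using A by blast
    then show ?thesis by (simp add: dist_real_def abs_minus_commute)
  qed
  then show ?thesis using \<rho> by blast
qed

lemma mvt_abs:
  fixes \<phi> \<phi>' :: "real \<Rightarrow> real"
  assumes "\<And>t. \<bar>t\<bar> \<le> \<bar>b\<bar> \<Longrightarrow> (\<phi> has_real_derivative \<phi>' t) (at t)"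
  shows "\<exists>\<xi>. \<bar>\<xi>\<bar> \<le> \<bar>b\<bar> \<and> \<phi> b - \<phi> 0 = b * \<phi>' \<xi>"
proof -
  consider "b > 0" | "b < 0" | "b = 0" by linarith
  then show ?thesis
  proof cases
    case 1
    obtain z where "0 < z" "z < b" "\<phi> b - \<phi> 0 = (b - 0) * \<phi>' z"
      using MVT2[OF 1, of \<phi> \<phi>'] assms by force
    then show ?thesis by (intro exI[of _ z]) auto
  next
    case 2
    obtain z where "b < z" "z < 0" "\<phi> 0 - \<phi> b = (0 - b) * \<phi>' z"
      using MVT2[OF 2, of \<phi> \<phi>'] assms by force
    then show ?thesis by (intro exI[of _ z]) (auto simp: algebra_simps)
  next
    case 3 then show ?thesis by (intro exI[of _ 0]) auto
  qed
qed

lemma chain_base: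
  fixes F :: "(nat \<Rightarrow> real) \<Rightarrow> real" and \<gamma> :: "real \<Rightarrow> nat \<Rightarrow> real"
    and G :: "nat \<Rightarrow> (nat \<Rightarrow> real) \<Rightarrow> real"
  assumes V: "openin (Rn_top d) V"
    and pd: "\<And>i x. i < d \<Longrightarrow> x \<in> V \<Longrightarrow> ((\<lambda>h. F (x(i := x i + h))) has_real_derivative G i x) (at 0)"
    and Gc: "\<And>i. i < d \<Longrightarrow> continuous_on V (G i)"
    and S: "open S" "s0 \<in> S" "\<And>s. s \<in> S \<Longrightarrow> \<gamma> s \<in> V"
    and dg: "\<And>i. i < d \<Longrightarrow> ((\<lambda>s. \<gamma> s i) has_real_derivative g' i) (at s0)"
  shows "((\<lambda>s. F (\<gamma> s)) has_real_derivative (\<Sum>i<d. G i (\<gamma> s0) * g' i)) (at s0)"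
proof -
  define x where "x = \<gamma> s0"
  have VR: "V \<subseteq> Rn d" using openin_Rn_subset[OF V] .
  have x: "x \<in> V" "x \<in> Rn d" using S VR x_def by auto
  obtain r where r: "r > 0" "\<And>w. w \<in> Rn d \<Longrightarrow> (\<forall>j<d. \<bar>w j - x j\<bar> < r) \<Longrightarrow> w \<in> V"
    using openin_Rn_box[OF V x(1)] by blast
  have ev: "eventually (\<lambda>s. s \<in> S \<and> (\<forall>j<d. \<bar>\<gamma> s j - x j\<bar> < \<delta>)) (at s0)" if "\<delta> > 0" for \<delta>
  proof -
    have "eventually (\<lambda>s. s \<in> S) (at s0)" using S(1,2) eventually_at_topological by blast
    moreover have "eventually (\<lambda>s. \<forall>j\<in>{..<d}. \<bar>\<gamma> s j - x j\<bar> < \<delta>) (at s0)"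
    proof (rule eventually_ball_finite)
      show "\<forall>j\<in>{..<d}. eventually (\<lambda>s. \<bar>\<gamma> s j - x j\<bar> < \<delta>) (at s0)"
      proof
        fix j assume "j \<in> {..<d}"
        then have "isCont (\<lambda>s. \<gamma> s j) s0" using dg DERIV_isCont by blast
        then have "((\<lambda>s. \<gamma> s j) \<longlongrightarrow> x j) (at s0)" by (simp add: isCont_def x_def)
        then show "eventually (\<lambda>s. \<bar>\<gamma> s j - x j\<bar> < \<delta>) (at s0)"
          using that unfolding tendsto_iff dist_real_def by blast
      qed
    qed simp
    ultimately show ?thesis by eventually_elim auto
  qed
  define z where "z i s = (\<lambda>j. if j < i then \<gamma> s j else x j)" for i s
  have z0: "z 0 s = x" for s by (simp add: z_def)
  have zd: "z d s = \<gamma> s" if "s \<in> S" for s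
  proof
    fix j
    have "\<gamma> s \<in> Rn d" using S(3) that VR by blast
    then show "z d s j = \<gamma> s j" using x(2) by (auto simp: z_def Rn_def)
  qed
  have zSuc: "z (Suc i) s = (z i s)(i := x i + (\<gamma> s i - x i))" for i s
    by (auto simp: z_def fun_eq_iff)
  have zi: "z i s i = x i" for i s by (simp add: z_def)
  have inV: "(z i s)(i := x i + t) \<in> V" "\<forall>j<d. \<bar>((z i s)(i := x i + t)) j - x j\<bar> < \<delta>"
    if "\<forall>j<d. \<bar>\<gamma> s j - x j\<bar> < \<delta>" "\<delta> \<le> r" "i < d" "\<bar>t\<bar> \<le> \<bar>\<gamma> s i - x i\<bar>" for i s t \<delta>
  proof -
    have \<delta>: "\<delta> > 0" using that(1,3) by fastforce
    show b: "\<forall>j<d. \<bar>((z i s)(i := x i + t)) j - x j\<bar> < \<delta>"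
      using that \<delta> by (auto simp: z_def)
    have "(z i s)(i := x i + t) \<in> Rn d" using x(2) that(3) by (auto simp: z_def Rn_def)
    moreover have "\<forall>j<d. \<bar>((z i s)(i := x i + t)) j - x j\<bar> < r" using b that(2) by force
    ultimately show "(z i s)(i := x i + t) \<in> V" using r(2) by blast
  qed
  have key: "\<exists>\<xi>. \<bar>\<xi>\<bar> \<le> \<bar>\<gamma> s i - x i\<bar> \<and>
      F (z (Suc i) s) - F (z i s) = (\<gamma> s i - x i) * G i ((z i s)(i := x i + \<xi>))"
    if s: "s \<in> S" "\<forall>j<d. \<bar>\<gamma> s j - x j\<bar> < r" and i: "i < d" for s i
  proof -
    define \<phi> where "\<phi> t = F ((z i s)(i := x i + t))" for t
    have "(\<phi> has_real_derivative G i ((z i s)(i := x i + t))) (at t)" if t: "\<bar>t\<bar> \<le> \<bar>\<gamma> s i - x i\<bar>" for t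
    proof -
      define w where "w = (z i s)(i := x i + t)"
      have "w \<in> V" using inV(1)[OF s(2) order.refl i t] w_def by simp
      then have "((\<lambda>h. F (w(i := w i + h))) has_real_derivative G i w) (at 0)" using pd i by blast
      moreover have "(\<lambda>h. F (w(i := w i + h))) = (\<lambda>h. \<phi> (h + t))"
        by (simp add: w_def \<phi>_def algebra_simps)
      ultimately have "((\<lambda>h. \<phi> (h + t)) has_real_derivative G i w) (at 0)" by simp
      then show ?thesis using DERIV_shift[of \<phi> _ 0 t] w_def by simp
    qed
    then obtain \<xi> where \<xi>: "\<bar>\<xi>\<bar> \<le> \<bar>\<gamma> s i - x i\<bar>"
      "\<phi> (\<gamma> s i - x i) - \<phi> 0 = (\<gamma> s i - x i) * G i ((z i s)(i := x i + \<xi>))"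
      using mvt_abs[of "\<gamma> s i - x i" \<phi> "\<lambda>t. G i ((z i s)(i := x i + t))"] by blast
    have "\<phi> (\<gamma> s i - x i) = F (z (Suc i) s)" using zSuc \<phi>_def by simp
    moreover have "\<phi> 0 = F (z i s)" using zi \<phi>_def by (simp add: fun_upd_idem)
    ultimately show ?thesis using \<xi> by metis
  qed
  have "\<forall>s. \<exists>X. s \<in> S \<and> (\<forall>j<d. \<bar>\<gamma> s j - x j\<bar> < r) \<longrightarrow> (\<forall>i<d. \<bar>X i\<bar> \<le> \<bar>\<gamma> s i - x i\<bar> \<and>
      F (z (Suc i) s) - F (z i s) = (\<gamma> s i - x i) * G i ((z i s)(i := x i + X i)))"
  proof
    fix s
    show "\<exists>X. s \<in> S \<and> (\<forall>j<d. \<bar>\<gamma> s j - x j\<bar> < r) \<longrightarrow> (\<forall>i<d. \<bar>X i\<bar> \<le> \<bar>\<gamma> s i - x i\<bar> \<and>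
      F (z (Suc i) s) - F (z i s) = (\<gamma> s i - x i) * G i ((z i s)(i := x i + X i)))"
      using key by metis
  qed
  then obtain \<Xi> where \<Xi>: "\<And>s i. s \<in> S \<Longrightarrow> (\<forall>j<d. \<bar>\<gamma> s j - x j\<bar> < r) \<Longrightarrow> i < d \<Longrightarrow>
      \<bar>\<Xi> s i\<bar> \<le> \<bar>\<gamma> s i - x i\<bar> \<and>
      F (z (Suc i) s) - F (z i s) = (\<gamma> s i - x i) * G i ((z i s)(i := x i + \<Xi> s i))"
    by metis
  define W where "W i s = (z i s)(i := x i + \<Xi> s i)" for i s
  have eq: "(F (\<gamma> s) - F x) / (s - s0) = (\<Sum>i<d. G i (W i s) * ((\<gamma> s i - x i) / (s - s0)))"
    if s: "s \<in> S" "\<forall>j<d. \<bar>\<gamma> s j - x j\<bar> < r" for s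
  proof -
    have "F (\<gamma> s) - F x = F (z d s) - F (z 0 s)" using zd[OF s(1)] z0 by simp
    also have "\<dots> = (\<Sum>i<d. F (z (Suc i) s) - F (z i s))" by (rule sum_lessThan_telescope[symmetric])
    also have "\<dots> = (\<Sum>i<d. (\<gamma> s i - x i) * G i (W i s))"
      using \<Xi>[OF s] W_def by (intro sum.cong) auto
    finally show ?thesis by (simp add: sum_divide_distrib algebra_simps)
  qed
  have limG: "((\<lambda>s. G i (W i s)) \<longlongrightarrow> G i x) (at s0)" if i: "i < d" for i
    unfolding tendsto_iff
  proof (intro allI impI)
    fix e :: real assume e: "e > 0"
    obtain \<rho> where \<rho>: "\<rho> > 0" "\<forall>w\<in>V. (\<forall>j<d. \<bar>w j - x j\<bar> < \<rho>) \<longrightarrow> \<bar>G i w - G i x\<bar> < e"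
      using cont_box[OF Gc[OF i] x(1) VR e] by blast
    have "min \<rho> r > 0" using \<rho> r by simp
    from ev[OF this] show "eventually (\<lambda>s. dist (G i (W i s)) (G i x) < e) (at s0)"
    proof eventually_elim
      case (elim s)
      then have s: "s \<in> S" "\<forall>j<d. \<bar>\<gamma> s j - x j\<bar> < r" by auto
      have t: "\<bar>\<Xi> s i\<bar> \<le> \<bar>\<gamma> s i - x i\<bar>" using \<Xi>[OF s i] by blast
      have "W i s \<in> V" "\<forall>j<d. \<bar>W i s j - x j\<bar> < min \<rho> r"
        using inV[of s "min \<rho> r" i "\<Xi> s i"] elim i t W_def by auto
      then show ?case using \<rho> by (simp add: dist_real_def)
    qed
  qed
  have limQ: "((\<lambda>s. (\<gamma> s i - x i) / (s - s0)) \<longlongrightarrow> g' i) (at s0)" if i: "i < d" for i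
    using dg[OF i] unfolding has_field_derivative_iff x_def by simp
  have lim: "((\<lambda>s. \<Sum>i<d. G i (W i s) * ((\<gamma> s i - x i) / (s - s0))) \<longlongrightarrow> (\<Sum>i<d. G i x * g' i)) (at s0)"
    by (intro tendsto_sum tendsto_mult limG limQ) auto
  have "eventually (\<lambda>s. (\<Sum>i<d. G i (W i s) * ((\<gamma> s i - x i) / (s - s0))) = (F (\<gamma> s) - F x) / (s - s0)) (at s0)"
    using ev[OF r(1)] by eventually_elim (use eq in auto)
  from Lim_transform_eventually[OF lim this]
  show ?thesis unfolding has_field_derivative_iff x_def by simp
qed

lemma smooth_deriv: "open S \<Longrightarrow> smooth_real_on S g \<Longrightarrow> smooth_real_on S (deriv g)"
  unfolding smooth_iff_Dn by (metis Dn_Suc')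

lemma smooth_has_deriv: "open S \<Longrightarrow> smooth_real_on S g \<Longrightarrow> x \<in> S \<Longrightarrow> (g has_real_derivative deriv g x) (at x)"
  using smooth_iff_Dn[of S g] by (metis Dn_Suc funpow_0)

lemma Ck_cont: "Ck d k V F \<Longrightarrow> continuous_on V F"
  by (cases k) auto

lemma curve_cont:
  fixes \<gamma> :: "real \<Rightarrow> nat \<Rightarrow> real"
  assumes "\<And>s. s \<in> S \<Longrightarrow> \<gamma> s \<in> Rn d" "\<And>i. i < d \<Longrightarrow> continuous_on S (\<lambda>s. \<gamma> s i)"
  shows "continuous_on S \<gamma>"
proof (rule continuous_on_coordinatewise_then_product)
  fix i
  show "continuous_on S (\<lambda>s. \<gamma> s i)"
  proof (cases "i < d")
    case True then show ?thesis using assms by blast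
  next
    case False
    have "continuous_on S (\<lambda>s. 0::real)" by simp
    then show ?thesis by (rule continuous_on_eq) (use assms False in \<open>auto simp: Rn_def\<close>)
  qed
qed

lemma chain_Ck:
  fixes F :: "(nat \<Rightarrow> real) \<Rightarrow> real" and \<gamma> :: "real \<Rightarrow> nat \<Rightarrow> real"
  assumes V: "openin (Rn_top d) V" and S: "open S" "\<And>s. s \<in> S \<Longrightarrow> \<gamma> s \<in> V"
    and sm: "\<And>i. i < d \<Longrightarrow> smooth_real_on S (\<lambda>s. \<gamma> s i)"
  shows "Ck d k V F \<Longrightarrow> Ck_real k S (\<lambda>s. F (\<gamma> s))"
proof (induction k arbitrary: F)
  have VR: "V \<subseteq> Rn d" using openin_Rn_subset[OF V] .
  have gc: "continuous_on S \<gamma>"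
    using S(2) VR sm smooth_cont by (intro curve_cont[of S \<gamma> d]) auto
  have cF: "continuous_on S (\<lambda>s. F (\<gamma> s))" if "continuous_on V F" for F
    using continuous_on_compose2[OF that gc] S(2) by blast
  {
    case 0 then show ?case using cF by simp
  next
    case (Suc k)
    from Suc.prems have cv: "continuous_on V F" and
      ex: "\<forall>i<d. \<exists>g. (\<forall>x\<in>V. ((\<lambda>h. F (x(i := x i + h))) has_real_derivative g x) (at 0)) \<and> Ck d k V g"
      by auto
    then obtain G where G: "\<And>i. i < d \<Longrightarrow> (\<forall>x\<in>V. ((\<lambda>h. F (x(i := x i + h))) has_real_derivative G i x) (at 0)) \<and> Ck d k V (G i)"
      by metis
    define D where "D s = (\<Sum>i<d. G i (\<gamma> s) * deriv (\<lambda>s. \<gamma> s i) s)" for s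
    have der: "\<forall>s\<in>S. ((\<lambda>s. F (\<gamma> s)) has_real_derivative D s) (at s)"
    proof
      fix s0 assume s0: "s0 \<in> S"
      show "((\<lambda>s. F (\<gamma> s)) has_real_derivative D s0) (at s0)"
        unfolding D_def
      proof (rule chain_base[OF V])
        show "\<And>i x. i < d \<Longrightarrow> x \<in> V \<Longrightarrow> ((\<lambda>h. F (x(i := x i + h))) has_real_derivative G i x) (at 0)"
          using G by blast
        show "\<And>i. i < d \<Longrightarrow> continuous_on V (G i)" using G Ck_cont by blast
        show "\<And>i. i < d \<Longrightarrow> ((\<lambda>s. \<gamma> s i) has_real_derivative deriv (\<lambda>s. \<gamma> s i) s0) (at s0)"
          using smooth_has_deriv[OF S(1) sm s0] by blast
      qed (use S s0 in auto)
    qed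
    have "Ck_real k S D"
      unfolding D_def
    proof (intro Ck_real_sum Ck_real_mult)
      fix i assume "i \<in> {..<d}"
      then have i: "i < d" by simp
      show "Ck_real k S (\<lambda>x. G i (\<gamma> x))" using Suc.IH G[OF i] by blast
      show "Ck_real k S (deriv (\<lambda>s. \<gamma> s i))"
        using smooth_deriv[OF S(1) sm[OF i]] unfolding smooth_real_on_def by blast
    qed simp
    then show ?case unfolding Ck_real.simps
      by (intro conjI[OF cF[OF cv]] exI[of _ D]) (use der in blast)
  }
qed

lemma chart_facts:
  assumes M: "smooth_manifold T d A" and UA: "(U, \<phi>) \<in> A"
  shows "openin T U" "U \<subseteq> topspace T" "\<phi> ` U \<subseteq> Rn d" "openin (Rn_top d) (\<phi> ` U)" "inj_on \<phi> U"
    "continuous_map (subtopology T U) (subtopology (Rn_top d) (\<phi> ` U)) \<phi>"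
    "continuous_map (subtopology (Rn_top d) (\<phi> ` U)) (subtopology T U) (inv_into U \<phi>)"
    "\<And>W. openin T W \<Longrightarrow> W \<subseteq> U \<Longrightarrow> openin (Rn_top d) (\<phi> ` W)"
proof -
  have ch: "is_chart T d U \<phi>" using M UA unfolding smooth_manifold_def by blast
  then have U: "openin T U" and o: "openin (Rn_top d) (\<phi> ` U)"
    and h: "homeomorphic_map (subtopology T U) (subtopology (Rn_top d) (\<phi> ` U)) \<phi>"
    unfolding is_chart_def by auto
  show "openin T U" "openin (Rn_top d) (\<phi> ` U)" using U o by auto
  show Ut: "U \<subseteq> topspace T" using openin_subset[OF U] .
  show "\<phi> ` U \<subseteq> Rn d" using openin_Rn_subset[OF o] .
  then have tU: "topspace (subtopology (Rn_top d) (\<phi> ` U)) = \<phi> ` U" by auto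
  have tT: "topspace (subtopology T U) = U" using Ut by auto
  show inj: "inj_on \<phi> U" using homeomorphic_imp_injective_map[OF h] tT by simp
  show "continuous_map (subtopology T U) (subtopology (Rn_top d) (\<phi> ` U)) \<phi>"
    using h homeomorphic_imp_continuous_map by blast
  obtain g where g: "homeomorphic_maps (subtopology T U) (subtopology (Rn_top d) (\<phi> ` U)) \<phi> g"
    using h homeomorphic_map_maps by blast
  show "continuous_map (subtopology (Rn_top d) (\<phi> ` U)) (subtopology T U) (inv_into U \<phi>)"
  proof (rule continuous_map_eq)
    show "continuous_map (subtopology (Rn_top d) (\<phi> ` U)) (subtopology T U) g"
      using g unfolding homeomorphic_maps_def by blast
    fix y assume "y \<in> topspace (subtopology (Rn_top d) (\<phi> ` U))"
    then obtain x where x: "x \<in> U" "y = \<phi> x" using tU by auto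
    then have "g y = x" using g tT unfolding homeomorphic_maps_def by auto
    then show "g y = inv_into U \<phi> y" using x inj by (simp add: inv_into_f_f)
  qed
  fix W assume W: "openin T W" "W \<subseteq> U"
  have "openin (subtopology T U) W" using W unfolding openin_subtopology by (intro exI[of _ W]) auto
  then have "openin (subtopology (Rn_top d) (\<phi> ` U)) (\<phi> ` W)"
    using homeomorphic_map_openness[OF h, of W] W tT Ut by blast
  then show "openin (Rn_top d) (\<phi> ` W)" using openin_trans_full o by blast
qed

definition chart_local :: "'a topology \<Rightarrow> nat \<Rightarrow> ('a set \<times> ('a \<Rightarrow> nat \<Rightarrow> real)) set \<Rightarrow> (real \<Rightarrow> 'a) \<Rightarrow> real set \<Rightarrow> bool" where
  "chart_local T d A c N \<longleftrightarrow> open N \<and> (\<exists>U \<phi>. (U, \<phi>) \<in> A \<and> c ` N \<subseteq> U \<and> (\<forall>j<d. smooth_real_on N (\<lambda>s. \<phi> (c s) j)))"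

lemma chart_local_cont:
  assumes M: "smooth_manifold T d A" and cl: "chart_local T d A c N"
  shows "continuous_map (subtopology euclideanreal N) T c"
proof -
  obtain U \<phi> where UA: "(U, \<phi>) \<in> A" and cN: "c ` N \<subseteq> U" and sm: "\<forall>j<d. smooth_real_on N (\<lambda>s. \<phi> (c s) j)"
    and N: "open N" using cl unfolding chart_local_def by blast
  note cf = chart_facts[OF M UA]
  have lc: "continuous_on N (\<lambda>s. \<phi> (c s))"
    using cf(3) cN sm smooth_cont by (intro curve_cont[of N _ d]) auto
  have "continuous_map (subtopology euclideanreal N) (subtopology (Rn_top d) (\<phi> ` U)) (\<lambda>s. \<phi> (c s))"
    unfolding continuous_map_in_subtopology Rn_top_def using lc cN cf(3) by auto
  then have "continuous_map (subtopology euclideanreal N) (subtopology T U) (inv_into U \<phi> \<circ> (\<lambda>s. \<phi> (c s)))"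
    using cf(7) continuous_map_compose by blast
  then have "continuous_map (subtopology euclideanreal N) T (inv_into U \<phi> \<circ> (\<lambda>s. \<phi> (c s)))"
    using continuous_map_in_subtopology by blast
  then show ?thesis
    by (rule continuous_map_eq) (use cN cf(5) in \<open>auto simp: inv_into_f_f\<close>)
qed

lemma local_cont:
  assumes "\<And>s. \<exists>N. open N \<and> s \<in> N \<and> continuous_map (subtopology euclideanreal N) T c"
  shows "continuous_map euclideanreal T c"
  unfolding continuous_map_def
proof (intro conjI allI impI Pi_I)
  fix s :: real
  obtain N where "open N" "s \<in> N" "continuous_map (subtopology euclideanreal N) T c" using assms by blast
  then show "c s \<in> topspace T" unfolding continuous_map_def by auto
next
  fix O' assume O': "openin T O'"
  have "open {x. c x \<in> O'}"
  proof (rule open_subopen[THEN iffD2], rule ballI)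
    fix s assume "s \<in> {x. c x \<in> O'}"
    obtain N where N: "open N" "s \<in> N" "continuous_map (subtopology euclideanreal N) T c" using assms by blast
    then have "openin (subtopology euclideanreal N) {x \<in> N. c x \<in> O'}"
      using openin_continuous_map_preimage[OF N(3) O'] by simp
    then have "open {x \<in> N. c x \<in> O'}" using N(1) by (simp add: openin_open_eq)
    then show "\<exists>T. open T \<and> s \<in> T \<and> T \<subseteq> {x. c x \<in> O'}"
      using N \<open>s \<in> {x. c x \<in> O'}\<close> by (intro exI[of _ "{x \<in> N. c x \<in> O'}"]) auto
  qed
  then show "openin euclideanreal {x \<in> topspace euclideanreal. c x \<in> O'}" by simp
qed

lemma key_smooth_curve:
  assumes M: "smooth_manifold T d A" and loc: "\<And>s. \<exists>N. s \<in> N \<and> chart_local T d A c N"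
  shows "smooth_curve T d A c"
  unfolding smooth_curve_def
proof (intro conjI ballI)
  show cc: "continuous_map euclideanreal T c"
  proof (rule local_cont)
    fix s
    obtain N where N: "s \<in> N" "chart_local T d A c N" using loc by blast
    have "open N" using N(2) unfolding chart_local_def by blast
    moreover have "continuous_map (subtopology euclideanreal N) T c" using chart_local_cont[OF M N(2)] .
    ultimately show "\<exists>N. open N \<and> s \<in> N \<and> continuous_map (subtopology euclideanreal N) T c"
      using N(1) by blast
  qed
  fix p assume pA: "p \<in> A"
  obtain U' \<psi> where p: "p = (U', \<psi>)" by force
  have U'A: "(U', \<psi>) \<in> A" using pA p by simp
  have oU': "openin T U'" using chart_facts(1)[OF M U'A] .
  have ocU: "open (c -` U')"
    using openin_continuous_map_preimage[OF cc oU'] by (simp add: vimage_def)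
  have "\<forall>j<d. smooth_real_on (c -` U') (\<lambda>s. \<psi> (c s) j)"
  proof (intro allI impI)
    fix j assume j: "j < d"
    show "smooth_real_on (c -` U') (\<lambda>s. \<psi> (c s) j)"
    proof (rule smooth_local[OF ocU])
      fix s0 assume s0: "s0 \<in> c -` U'"
      obtain N where N: "s0 \<in> N" "chart_local T d A c N" using loc by blast
      then obtain U \<phi> where UA: "(U, \<phi>) \<in> A" and cN: "c ` N \<subseteq> U"
        and sm: "\<forall>j<d. smooth_real_on N (\<lambda>s. \<phi> (c s) j)" and oN: "open N"
        unfolding chart_local_def by blast
      note cf = chart_facts[OF M UA]
      define S' where "S' = N \<inter> c -` U'"
      have oS': "open S'" using oN ocU S'_def by auto
      define V where "V = \<phi> ` (U \<inter> U')"
      have oV: "openin (Rn_top d) V" unfolding V_def using cf(8) cf(1) oU' by blast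
      have trans: "smooth_map_Rn d d V (\<psi> \<circ> inv_into U \<phi>)"
        using M UA U'A unfolding smooth_manifold_def V_def by fast
      then have Ck: "Ck d k V (\<lambda>x. (\<psi> \<circ> inv_into U \<phi>) x j)" for k
        unfolding smooth_map_Rn_def using j by blast
      have "Ck_real k S' (\<lambda>s. (\<psi> \<circ> inv_into U \<phi>) (\<phi> (c s)) j)" for k
      proof (rule chain_Ck[OF oV oS' _ _ Ck])
        show "\<And>s. s \<in> S' \<Longrightarrow> \<phi> (c s) \<in> V" using cN S'_def V_def by auto
        show "\<And>i. i < d \<Longrightarrow> smooth_real_on S' (\<lambda>s. \<phi> (c s) i)"
          using sm smooth_subset S'_def by blast
      qed
      then have "smooth_real_on S' (\<lambda>s. (\<psi> \<circ> inv_into U \<phi>) (\<phi> (c s)) j)"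
        unfolding smooth_real_on_def by blast
      then have "smooth_real_on S' (\<lambda>s. \<psi> (c s) j)"
        by (rule smooth_cong[OF oS', rotated]) (use cN cf(5) S'_def in \<open>auto simp: inv_into_f_f\<close>)
      then show "\<exists>N. open N \<and> s0 \<in> N \<and> smooth_real_on N (\<lambda>s. \<psi> (c s) j)"
        using oS' s0 N(1) S'_def by blast
    qed
  qed
  then show "case p of (U, \<phi>) \<Rightarrow> \<forall>j<d. smooth_real_on (c -` U) (\<lambda>s. \<phi> (c s) j)"
    using p by simp
qed

lemma smooth_curve_local:
  assumes M: "smooth_manifold T d A" and c: "smooth_curve T d A c"
  shows "\<exists>N. s \<in> N \<and> chart_local T d A c N"
proof -
  have cc: "continuous_map euclideanreal T c" using c unfolding smooth_curve_def by blast
  then have "c s \<in> topspace T" by (simp add: continuous_map_def Pi_iff)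
  then have "c s \<in> \<Union>(fst ` A)" using M unfolding smooth_manifold_def by blast
  then obtain U \<phi> where UA: "(U, \<phi>) \<in> A" and cs: "c s \<in> U" by force
  have "open (c -` U)"
    using openin_continuous_map_preimage[OF cc chart_facts(1)[OF M UA]] by (simp add: vimage_def)
  moreover have "\<forall>j<d. smooth_real_on (c -` U) (\<lambda>s. \<phi> (c s) j)"
    using c UA unfolding smooth_curve_def by fast
  ultimately show ?thesis using UA cs unfolding chart_local_def by (intro exI[of _ "c -` U"]) auto
qed

lemma chart_local_cong:
  assumes "chart_local T d A c N" "open N'" "N' \<subseteq> N" "\<And>s. s \<in> N' \<Longrightarrow> c' s = c s"
  shows "chart_local T d A c' N'"
proof -
  obtain U \<phi> where UA: "(U, \<phi>) \<in> A" and cN: "c ` N \<subseteq> U" and sm: "\<forall>j<d. smooth_real_on N (\<lambda>s. \<phi> (c s) j)"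
    using assms(1) unfolding chart_local_def by blast
  have "\<forall>j<d. smooth_real_on N' (\<lambda>s. \<phi> (c' s) j)"
  proof (intro allI impI)
    fix j assume "j < d"
    then have "smooth_real_on N' (\<lambda>s. \<phi> (c s) j)" using sm smooth_subset assms(3) by blast
    then show "smooth_real_on N' (\<lambda>s. \<phi> (c' s) j)"
      by (rule smooth_cong[OF assms(2), rotated]) (use assms(4) in auto)
  qed
  moreover have "c' ` N' \<subseteq> U" using cN assms(3,4) by auto
  ultimately show ?thesis using UA assms(2) unfolding chart_local_def by blast
qed

lemma chart_local_affine:
  assumes "chart_local T d A c N"
  shows "chart_local T d A (\<lambda>s. c (a * s + b)) {s. a * s + b \<in> N}"
proof -
  obtain U \<phi> where UA: "(U, \<phi>) \<in> A" and cN: "c ` N \<subseteq> U" and sm: "\<forall>j<d. smooth_real_on N (\<lambda>s. \<phi> (c s) j)"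
    and oN: "open N" using assms(1) unfolding chart_local_def by blast
  have o: "open {s. a * s + b \<in> N}"
  proof -
    have "continuous_on UNIV (\<lambda>s::real. a * s + b)" by (intro continuous_intros)
    then show ?thesis using open_vimage[OF oN] by (simp add: vimage_def)
  qed
  have aff: "smooth_real_on {s. a * s + b \<in> N} (\<lambda>s. a * s + b)"
    by (intro smooth_add smooth_mult smooth_const smooth_id)
  have "\<forall>j<d. smooth_real_on {s. a * s + b \<in> N} (\<lambda>s. \<phi> (c (a * s + b)) j)"
    using smooth_compose[OF _ aff] sm by auto
  then show ?thesis using UA cN o unfolding chart_local_def by (intro conjI exI[of _ U] exI[of _ \<phi>]) auto
qed

lemma smooth_curve_affine:
  assumes M: "smooth_manifold T d A" and c: "smooth_curve T d A c"
  shows "smooth_curve T d A (\<lambda>s. c (a * s + b))"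
proof (rule key_smooth_curve[OF M])
  fix s
  obtain N where N: "a * s + b \<in> N" "chart_local T d A c N" using smooth_curve_local[OF M c] by blast
  show "\<exists>N. s \<in> N \<and> chart_local T d A (\<lambda>s. c (a * s + b)) N"
  proof (rule exI[of _ "{t. a * t + b \<in> N}"], rule conjI)
    show "chart_local T d A (\<lambda>s. c (a * s + b)) {t. a * t + b \<in> N}" using chart_local_affine[OF N(2)] .
    show "s \<in> {t. a * t + b \<in> N}" using N(1) by simp
  qed
qed

lemma smooth_curve_glue:
  assumes M: "smooth_manifold T d A"
    and loc: "\<And>s. \<exists>N c'. open N \<and> s \<in> N \<and> smooth_curve T d A c' \<and> (\<forall>t\<in>N. c t = c' t)"
  shows "smooth_curve T d A c"
proof (rule key_smooth_curve[OF M])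
  fix s
  obtain N c' where N: "open N" "s \<in> N" "smooth_curve T d A c'" "\<forall>t\<in>N. c t = c' t" using loc by blast
  obtain N' where N': "s \<in> N'" "chart_local T d A c' N'" using smooth_curve_local[OF M N(3)] by blast
  have "open N'" using N'(2) chart_local_def by blast
  then have "chart_local T d A c (N \<inter> N')"
    using chart_local_cong[OF N'(2), of "N \<inter> N'" c] N by auto
  then show "\<exists>N. s \<in> N \<and> chart_local T d A c N" using N N' by blast
qed

lemma smooth_curve_const:
  assumes M: "smooth_manifold T d A" and p: "p \<in> topspace T"
  shows "smooth_curve T d A (\<lambda>_. p)"
proof (rule key_smooth_curve[OF M])
  fix s
  have "p \<in> \<Union>(fst ` A)" using M p unfolding smooth_manifold_def by blast
  then obtain U \<phi> where UA: "(U, \<phi>) \<in> A" and pU: "p \<in> U" by force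
  have "chart_local T d A (\<lambda>_. p) UNIV"
    unfolding chart_local_def using UA pU smooth_const by fastforce
  then show "\<exists>N. s \<in> N \<and> chart_local T d A (\<lambda>_. p) N" by blast
qed

definition NC :: "'a topology \<Rightarrow> nat \<Rightarrow> ('a set \<times> ('a \<Rightarrow> nat \<Rightarrow> real)) set \<Rightarrow> 'a \<Rightarrow> 'a \<Rightarrow> (real \<Rightarrow> 'a) \<Rightarrow> bool" where
  "NC T d A p q \<gamma> \<longleftrightarrow> smooth_curve T d A \<gamma> \<and> (\<forall>s\<le>1/3. \<gamma> s = p) \<and> (\<forall>s\<ge>2/3. \<gamma> s = q)"

lemma NC_refl: "smooth_manifold T d A \<Longrightarrow> p \<in> topspace T \<Longrightarrow> NC T d A p p (\<lambda>_. p)"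
  unfolding NC_def using smooth_curve_const by simp

lemma NC_sym:
  assumes M: "smooth_manifold T d A" and "NC T d A p q \<gamma>"
  shows "NC T d A q p (\<lambda>s. \<gamma> ((-1) * s + 1))"
  using assms smooth_curve_affine[OF M, of \<gamma> "-1" 1] unfolding NC_def by auto

lemma NC_trans:
  assumes M: "smooth_manifold T d A" and g1: "NC T d A p q \<gamma>1" and g2: "NC T d A q r \<gamma>2"
  shows "NC T d A p r (\<lambda>s. if s \<le> 1/2 then \<gamma>1 (3 * s + (-2/3)) else \<gamma>2 (3 * s + (-4/3)))"
  unfolding NC_def
proof (intro conjI allI impI)
  let ?c = "\<lambda>s. if s \<le> 1/2 then \<gamma>1 (3 * s + (-2/3)) else \<gamma>2 (3 * s + (-4/3))"
  have "smooth_curve T d A \<gamma>1" using g1 unfolding NC_def by blast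
  from smooth_curve_affine[OF M this, of 3 "-2/3"]
  have s1: "smooth_curve T d A (\<lambda>s. \<gamma>1 (3 * s + (-2/3)))" .
  have "smooth_curve T d A \<gamma>2" using g2 unfolding NC_def by blast
  from smooth_curve_affine[OF M this, of 3 "-4/3"]
  have s2: "smooth_curve T d A (\<lambda>s. \<gamma>2 (3 * s + (-4/3)))" .
  show "smooth_curve T d A ?c"
  proof (rule smooth_curve_glue[OF M])
    fix s :: real
    show "\<exists>N c'. open N \<and> s \<in> N \<and> smooth_curve T d A c' \<and> (\<forall>t\<in>N. ?c t = c' t)"
    proof (cases "s < 5/9")
      case True
      have "\<forall>t\<in>{..<5/9}. ?c t = \<gamma>1 (3 * t + (-2/3))"
      proof
        fix t :: real assume t: "t \<in> {..<5/9}"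
        show "?c t = \<gamma>1 (3 * t + (-2/3))"
        proof (cases "t \<le> 1/2")
          case False
          then have "\<gamma>2 (3 * t + (-4/3)) = q" "\<gamma>1 (3 * t + (-2/3)) = q"
            using g1 g2 t unfolding NC_def by auto
          then show ?thesis using False by simp
        qed simp
      qed
      then show ?thesis using True s1 by (intro exI[of _ "{..<5/9}"] exI[of _ "\<lambda>s. \<gamma>1 (3 * s + (-2/3))"]) auto
    next
      case False
      have "\<forall>t\<in>{4/9<..}. ?c t = \<gamma>2 (3 * t + (-4/3))"
      proof
        fix t :: real assume t: "t \<in> {4/9<..}"
        show "?c t = \<gamma>2 (3 * t + (-4/3))"
        proof (cases "t \<le> 1/2")
          case True
          then have "\<gamma>2 (3 * t + (-4/3)) = q" "\<gamma>1 (3 * t + (-2/3)) = q"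
            using g1 g2 t unfolding NC_def by auto
          then show ?thesis using True by simp
        qed simp
      qed
      then show ?thesis using False s2 by (intro exI[of _ "{4/9<..}"] exI[of _ "\<lambda>s. \<gamma>2 (3 * s + (-4/3))"]) auto
    qed
  qed
  fix s :: real
  show "s \<le> 1/3 \<Longrightarrow> ?c s = p" using g1 unfolding NC_def by auto
  show "s \<ge> 2/3 \<Longrightarrow> ?c s = r" using g2 unfolding NC_def by auto
qed

definition segc :: "'a set \<Rightarrow> ('a \<Rightarrow> nat \<Rightarrow> real) \<Rightarrow> (nat \<Rightarrow> real) \<Rightarrow> (nat \<Rightarrow> real) \<Rightarrow> real \<Rightarrow> 'a" where
  "segc U \<phi> a b \<sigma> = inv_into U \<phi> (\<lambda>j. a j + beta \<sigma> * (b j - a j))"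

lemma segc_NC:
  assumes M: "smooth_manifold T d A" and UA: "(U, \<phi>) \<in> A"
    and seg: "\<And>t. 0 \<le> t \<Longrightarrow> t \<le> 1 \<Longrightarrow> (\<lambda>j. a j + t * (b j - a j)) \<in> \<phi> ` U"
  shows "NC T d A (inv_into U \<phi> a) (inv_into U \<phi> b) (segc U \<phi> a b)"
    and "\<And>\<sigma>. segc U \<phi> a b \<sigma> \<in> U" "\<And>\<sigma>. \<phi> (segc U \<phi> a b \<sigma>) = (\<lambda>j. a j + beta \<sigma> * (b j - a j))"
proof -
  have inU: "(\<lambda>j. a j + beta \<sigma> * (b j - a j)) \<in> \<phi> ` U" for \<sigma> using seg beta_range by blast
  show sU: "segc U \<phi> a b \<sigma> \<in> U" for \<sigma> unfolding segc_def using inU by (simp add: inv_into_into)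
  show ph: "\<phi> (segc U \<phi> a b \<sigma>) = (\<lambda>j. a j + beta \<sigma> * (b j - a j))" for \<sigma>
    unfolding segc_def using inU by (simp add: f_inv_into_f)
  have "smooth_curve T d A (segc U \<phi> a b)"
  proof (rule key_smooth_curve[OF M])
    fix s
    have "chart_local T d A (segc U \<phi> a b) UNIV"
      unfolding chart_local_def
    proof (intro conjI exI[of _ U] exI[of _ \<phi>] allI impI)
      fix j
      show "smooth_real_on UNIV (\<lambda>s. \<phi> (segc U \<phi> a b s) j)"
        unfolding ph by (intro smooth_add smooth_const smooth_mult beta_smooth)
    qed (use UA sU in auto)
    then show "\<exists>N. s \<in> N \<and> chart_local T d A (segc U \<phi> a b) N" by blast
  qed
  moreover have "segc U \<phi> a b s = inv_into U \<phi> a" if "s \<le> 1/3" for s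
    unfolding segc_def using beta_0[OF that] by simp
  moreover have "segc U \<phi> a b s = inv_into U \<phi> b" if "s \<ge> 2/3" for s
    unfolding segc_def using beta_1[OF that] by simp
  ultimately show "NC T d A (inv_into U \<phi> a) (inv_into U \<phi> b) (segc U \<phi> a b)"
    unfolding NC_def by blast
qed

lemma box_convex:
  assumes "a \<in> Rn d" "b \<in> Rn d" "\<forall>j<d. \<bar>a j - x j\<bar> < \<rho>" "\<forall>j<d. \<bar>b j - x j\<bar> < \<rho>" "0 \<le> t" "t \<le> 1"
  shows "(\<lambda>j. a j + t * (b j - a j)) \<in> Rn d" "\<forall>j<d. \<bar>a j + t * (b j - a j) - x j\<bar> < \<rho>"
proof -
  show "(\<lambda>j. a j + t * (b j - a j)) \<in> Rn d" using assms(1,2) by (simp add: Rn_def)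
  show "\<forall>j<d. \<bar>a j + t * (b j - a j) - x j\<bar> < \<rho>"
  proof (intro allI impI)
    fix j assume j: "j < d"
    have e: "a j + t * (b j - a j) - x j = (1 - t) * (a j - x j) + t * (b j - x j)" by (simp add: algebra_simps)
    have "\<bar>(1 - t) * (a j - x j)\<bar> \<le> (1 - t) * \<bar>a j - x j\<bar>" using assms(6) by (simp add: abs_mult)
    moreover have "\<bar>t * (b j - x j)\<bar> \<le> t * \<bar>b j - x j\<bar>" using assms(5) by (simp add: abs_mult)
    moreover have "(1 - t) * \<bar>a j - x j\<bar> + t * \<bar>b j - x j\<bar> < \<rho>"
    proof -
      have "(1 - t) * \<bar>a j - x j\<bar> \<le> (1 - t) * \<rho>" using assms(3,6) j by (intro mult_left_mono) auto
      moreover have "t * \<bar>b j - x j\<bar> \<le> t * \<rho>" using assms(4,5) j by (intro mult_left_mono) auto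
      moreover have "t * \<bar>b j - x j\<bar> < t * \<rho> \<or> (1 - t) * \<bar>a j - x j\<bar> < (1 - t) * \<rho>"
        using assms(3,4,5,6) j by (cases "t = 0") (auto intro: mult_strict_left_mono)
      ultimately show ?thesis by (auto simp: algebra_simps)
    qed
    ultimately show "\<bar>a j + t * (b j - a j) - x j\<bar> < \<rho>" unfolding e by linarith
  qed
qed

lemma open_box: "open {z :: nat \<Rightarrow> real. \<forall>j<d. \<bar>z j - c j\<bar> < \<rho>}"
proof -
  have "open (\<Inter>j\<in>{..<d}. (\<lambda>z::nat\<Rightarrow>real. z j) -` ball (c j) \<rho>)"
    by (intro open_INT ballI open_vimage open_ball continuous_on_product_coordinates) simp
  moreover have "(\<Inter>j\<in>{..<d}. (\<lambda>z::nat\<Rightarrow>real. z j) -` ball (c j) \<rho>) = {z. \<forall>j<d. \<bar>z j - c j\<bar> < \<rho>}"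
    by (auto simp: dist_real_def abs_minus_commute)
  ultimately show ?thesis by simp
qed

lemma chart_cont_euclidean:
  assumes M: "smooth_manifold T d A" and UA: "(U, \<phi>) \<in> A"
  shows "continuous_map (subtopology T U) euclidean \<phi>"
proof -
  have "continuous_map (subtopology T U) (Rn_top d) \<phi>"
    using chart_facts(6)[OF M UA] continuous_map_in_subtopology by blast
  then show ?thesis unfolding Rn_top_def using continuous_map_in_subtopology by blast
qed

lemma chart_box_open:
  assumes M: "smooth_manifold T d A" and UA: "(U, \<phi>) \<in> A"
  shows "openin T {y \<in> U. \<forall>j<d. \<bar>\<phi> y j - c j\<bar> < \<rho>}"
proof -
  have U: "openin T U" "U \<subseteq> topspace T" using chart_facts[OF M UA] by auto
  have "openin (subtopology T U) {y \<in> topspace (subtopology T U). \<phi> y \<in> {z. \<forall>j<d. \<bar>z j - c j\<bar> < \<rho>}}"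
    by (rule openin_continuous_map_preimage[OF chart_cont_euclidean[OF M UA]]) (simp add: open_box)
  moreover have "{y \<in> topspace (subtopology T U). \<phi> y \<in> {z. \<forall>j<d. \<bar>z j - c j\<bar> < \<rho>}} = {y \<in> U. \<forall>j<d. \<bar>\<phi> y j - c j\<bar> < \<rho>}"
    using U by auto
  ultimately have "openin (subtopology T U) {y \<in> U. \<forall>j<d. \<bar>\<phi> y j - c j\<bar> < \<rho>}" by simp
  from openin_trans_full[OF this U(1)] show ?thesis .
qed

lemma chart_nbhd:
  assumes M: "smooth_manifold T d A" and q: "q \<in> topspace T"
  shows "\<exists>W. openin T W \<and> q \<in> W \<and> (\<forall>y\<in>W. \<exists>\<gamma>. NC T d A q y \<gamma>)"
proof -
  have "q \<in> \<Union>(fst ` A)" using M q unfolding smooth_manifold_def by blast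
  then obtain U \<phi> where UA: "(U, \<phi>) \<in> A" and qU: "q \<in> U" by force
  note cf = chart_facts[OF M UA]
  obtain \<rho> where \<rho>: "\<rho> > 0" "\<forall>w\<in>Rn d. (\<forall>j<d. \<bar>w j - \<phi> q j\<bar> < \<rho>) \<longrightarrow> w \<in> \<phi> ` U"
    using openin_Rn_box[OF cf(4), of "\<phi> q"] qU by blast
  define W where "W = {y \<in> U. \<forall>j<d. \<bar>\<phi> y j - \<phi> q j\<bar> < \<rho>}"
  have "openin T W" unfolding W_def by (rule chart_box_open[OF M UA])
  moreover have "q \<in> W" using qU \<rho> W_def by auto
  moreover have "\<exists>\<gamma>. NC T d A q y \<gamma>" if y: "y \<in> W" for y
  proof -
    have yU: "y \<in> U" using y W_def by auto
    have seg: "(\<lambda>j. \<phi> q j + t * (\<phi> y j - \<phi> q j)) \<in> \<phi> ` U" if "0 \<le> t" "t \<le> 1" for t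
    proof -
      have a: "\<phi> q \<in> Rn d" "\<phi> y \<in> Rn d" using cf(3) qU yU by auto
      have b: "\<forall>j<d. \<bar>\<phi> q j - \<phi> q j\<bar> < \<rho>" "\<forall>j<d. \<bar>\<phi> y j - \<phi> q j\<bar> < \<rho>" using \<rho> y W_def by auto
      from box_convex[OF a b that] have 1: "(\<lambda>j. \<phi> q j + t * (\<phi> y j - \<phi> q j)) \<in> Rn d"
        and 2: "\<forall>j<d. \<bar>(\<lambda>j. \<phi> q j + t * (\<phi> y j - \<phi> q j)) j - \<phi> q j\<bar> < \<rho>" by simp_all
      show ?thesis by (rule \<rho>(2)[rule_format, OF 1]) (use 2 in simp)
    qed
    have "NC T d A (inv_into U \<phi> (\<phi> q)) (inv_into U \<phi> (\<phi> y)) (segc U \<phi> (\<phi> q) (\<phi> y))"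
      using segc_NC(1)[OF M UA seg] by blast
    then show ?thesis using qU yU cf(5) by (metis inv_into_f_f)
  qed
  ultimately show ?thesis by blast
qed

lemma NC_connected:
  assumes M: "smooth_manifold T d A" and con: "connected_space T"
    and p: "p \<in> topspace T" and q: "q \<in> topspace T"
  shows "\<exists>\<gamma>. NC T d A p q \<gamma>"
proof -
  define C where "C = {q \<in> topspace T. \<exists>\<gamma>. NC T d A p q \<gamma>}"
  have oC: "openin T C"
    unfolding openin_subopen[of T C]
  proof
    fix y assume y: "y \<in> C"
    obtain W where W: "openin T W" "y \<in> W" "\<forall>z\<in>W. \<exists>\<gamma>. NC T d A y z \<gamma>"
      using chart_nbhd[OF M] y C_def by blast
    have "W \<subseteq> C"
    proof
      fix z assume z: "z \<in> W"
      obtain \<gamma>1 where g1: "NC T d A p y \<gamma>1" using y C_def by blast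
      obtain \<gamma>2 where g2: "NC T d A y z \<gamma>2" using W z by blast
      have "\<exists>\<gamma>. NC T d A p z \<gamma>" using NC_trans[OF M g1 g2] by blast
      then show "z \<in> C" using z W openin_subset C_def by blast
    qed
    then show "\<exists>T'. openin T T' \<and> y \<in> T' \<and> T' \<subseteq> C" using W by blast
  qed
  have cC: "closedin T C"
    unfolding closedin_def
  proof
    show "C \<subseteq> topspace T" using C_def by blast
    show "openin T (topspace T - C)"
      unfolding openin_subopen[of T "topspace T - C"]
    proof
      fix y assume y: "y \<in> topspace T - C"
      obtain W where W: "openin T W" "y \<in> W" "\<forall>z\<in>W. \<exists>\<gamma>. NC T d A y z \<gamma>"
        using chart_nbhd[OF M] y by blast
      have "W \<subseteq> topspace T - C"
      proof
        fix z assume z: "z \<in> W"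
        have "z \<notin> C"
        proof
          assume "z \<in> C"
          then obtain \<gamma>1 where g1: "NC T d A p z \<gamma>1" using C_def by blast
          obtain \<gamma>2 where g2: "NC T d A y z \<gamma>2" using W z by blast
          have "\<exists>\<gamma>. NC T d A p y \<gamma>" using NC_trans[OF M g1 NC_sym[OF M g2]] by blast
          then show False using y C_def by blast
        qed
        then show "z \<in> topspace T - C" using z W openin_subset by blast
      qed
      then show "\<exists>T'. openin T T' \<and> y \<in> T' \<and> T' \<subseteq> topspace T - C" using W by blast
    qed
  qed
  have "p \<in> C" using NC_refl[OF M p] p C_def by blast
  then have "C = topspace T" using con oC cC unfolding connected_space_clopen_in by blast
  then show ?thesis using q C_def by blast
qed

definition tau :: "nat \<Rightarrow> real" where "tau k = (1/2) ^ k"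
definition dl :: "nat \<Rightarrow> real" where "dl k = (1/2) ^ (k * k)"
definition kk :: "real \<Rightarrow> nat" where "kk s = (LEAST k. tau (Suc k) < s)"

lemma tau_pos: "tau k > 0" by (simp add: tau_def)
lemma tau_le1: "tau k \<le> 1" by (simp add: tau_def power_le_one)
lemma tau_Suc: "tau (Suc k) = tau k / 2" by (simp add: tau_def)
lemma tau_anti: "m \<le> n \<Longrightarrow> tau n \<le> tau m"
  unfolding tau_def by (rule power_decreasing) auto
lemma tau_strict: "m < n \<Longrightarrow> tau n < tau m"
  unfolding tau_def by (rule power_strict_decreasing) auto
lemma tau_0: "tau 0 = 1" by (simp add: tau_def)
lemma dl_pos: "dl k > 0" by (simp add: dl_def)
lemma dl_anti: "m \<le> n \<Longrightarrow> dl n \<le> dl m"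
  unfolding dl_def by (rule power_decreasing) (auto intro: mult_le_mono)
lemma tau_lim: "tau \<longlonglongrightarrow> 0"
  unfolding tau_def by (rule LIMSEQ_power_zero) simp

lemma kk_spec:
  assumes "0 < s" "s \<le> 1"
  shows "tau (Suc (kk s)) < s" "s \<le> tau (kk s)"
proof -
  obtain n where "(1/2::real) ^ n < s" using real_arch_pow_inv[OF assms(1), of "1/2"] by auto
  then have ex: "tau (Suc n) < s" using assms(1) by (simp add: tau_def)
  show "tau (Suc (kk s)) < s" unfolding kk_def by (rule LeastI[of _ n]) (rule ex)
  show "s \<le> tau (kk s)"
  proof (cases "kk s")
    case 0 then show ?thesis using assms tau_0 by simp
  next
    case (Suc k')
    then have "\<not> tau (Suc k') < s" unfolding kk_def using not_less_Least[of k' "\<lambda>k. tau (Suc k) < s"]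
      by (metis lessI)
    then show ?thesis using Suc by simp
  qed
qed

lemma kk_unique:
  assumes "tau (Suc k) < s" "s \<le> tau k"
  shows "kk s = k"
proof -
  have s: "0 < s" "s \<le> 1" using assms tau_pos[of "Suc k"] tau_le1[of k] by linarith+
  note sp = kk_spec[OF s]
  show ?thesis
  proof (rule ccontr)
    assume "kk s \<noteq> k"
    then consider "kk s < k" | "k < kk s" by linarith
    then show False
    proof cases
      case 1
      then have "tau k \<le> tau (Suc (kk s))" by (intro tau_anti) simp
      then show False using sp assms by linarith
    next
      case 2
      then have "tau (kk s) \<le> tau (Suc k)" by (intro tau_anti) simp
      then show False using sp assms by linarith
    qed
  qed
qed

lemma Dn_affine:
  assumes h: "smooth_real_on UNIV h"
  shows "Dn (Suc m) (\<lambda>s. A + B * h (c * s + e)) = (\<lambda>s. B * c ^ Suc m * Dn (Suc m) h (c * s + e))"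
proof (induction m)
  have Dh: "\<And>m x. (Dn m h has_real_derivative Dn (Suc m) h x) (at x)"
    using h smooth_iff_Dn[of UNIV h] by auto
  {
    case 0
    show ?case
    proof
      fix s
      have "((\<lambda>s. A + B * h (c * s + e)) has_real_derivative B * (Dn 1 h (c * s + e) * c)) (at s)"
        using Dh[of 0 "c * s + e"]
        by (auto intro!: derivative_eq_intros DERIV_chain2[where f = h])
      then show "Dn (Suc 0) (\<lambda>s. A + B * h (c * s + e)) s = B * c ^ Suc 0 * Dn (Suc 0) h (c * s + e)"
        by (simp add: DERIV_imp_deriv algebra_simps)
    qed
  next
    case (Suc m)
    show ?case
    proof
      fix s
      have "Dn (Suc (Suc m)) (\<lambda>s. A + B * h (c * s + e)) s = deriv (Dn (Suc m) (\<lambda>s. A + B * h (c * s + e))) s"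
        by simp
      also have "\<dots> = deriv (\<lambda>s. B * c ^ Suc m * Dn (Suc m) h (c * s + e)) s" using Suc by simp
      also have "\<dots> = B * c ^ Suc m * (Dn (Suc (Suc m)) h (c * s + e) * c)"
      proof (rule DERIV_imp_deriv)
        show "((\<lambda>s. B * c ^ Suc m * Dn (Suc m) h (c * s + e)) has_real_derivative
            B * c ^ Suc m * (Dn (Suc (Suc m)) h (c * s + e) * c)) (at s)"
        proof -
          have "((\<lambda>s. Dn (Suc m) h (c * s + e)) has_real_derivative Dn (Suc (Suc m)) h (c * s + e) * c) (at s)"
            by (rule DERIV_chain2[OF Dh]) (auto intro!: derivative_eq_intros)
          then show ?thesis by (rule DERIV_cmult)
        qed
      qed
      finally show "Dn (Suc (Suc m)) (\<lambda>s. A + B * h (c * s + e)) s = B * c ^ Suc (Suc m) * Dn (Suc (Suc m)) h (c * s + e)"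
        by (simp add: algebra_simps)
    qed
  }
qed

lemma piece_bound:
  assumes "\<forall>x. \<bar>Dn m beta x\<bar> \<le> Bm" "\<bar>A\<bar> < \<delta>" "\<bar>B\<bar> < 2 * \<delta>"
  shows "\<bar>Dn m (\<lambda>s. A + B * beta (c * s + e)) s\<bar> \<le> (3 + 2 * Bm) * \<bar>c\<bar> ^ m * \<delta>"
proof -
  have Bm: "Bm \<ge> 0" using assms(1) by (meson abs_ge_zero order.trans)
  have d: "\<delta> > 0" using assms(2) by linarith
  show ?thesis
  proof (cases m)
    case 0
    have "\<bar>A + B * beta (c * s + e)\<bar> \<le> \<bar>A\<bar> + \<bar>B\<bar> * \<bar>beta (c * s + e)\<bar>"
      by (metis abs_mult abs_triangle_ineq)
    also have "\<dots> \<le> \<bar>A\<bar> + \<bar>B\<bar>" using beta_range[of "c * s + e"] by (simp add: mult_left_le)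
    also have "\<dots> \<le> 3 * \<delta>" using assms by linarith
    also have "\<dots> \<le> (3 + 2 * Bm) * \<delta>" using Bm d by (simp add: mult_right_mono)
    finally show ?thesis using 0 by simp
  next
    case (Suc n)
    have "\<bar>Dn m (\<lambda>s. A + B * beta (c * s + e)) s\<bar> = \<bar>B\<bar> * \<bar>c\<bar> ^ m * \<bar>Dn m beta (c * s + e)\<bar>"
      using Dn_affine[OF beta_smooth, of n A B c e] Suc by (simp add: abs_mult power_abs)
    also have "\<dots> \<le> (2 * \<delta>) * \<bar>c\<bar> ^ m * Bm"
      using assms by (intro mult_mono) auto
    also have "\<dots> \<le> (3 + 2 * Bm) * \<bar>c\<bar> ^ m * \<delta>"
    proof -
      have "(2 * \<delta>) * \<bar>c\<bar> ^ m * Bm = (2 * Bm) * \<bar>c\<bar> ^ m * \<delta>" by simp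
      also have "\<dots> \<le> (3 + 2 * Bm) * \<bar>c\<bar> ^ m * \<delta>" using d by (intro mult_right_mono) auto
      finally show ?thesis .
    qed
    finally show ?thesis .
  qed
qed

lemma E_lim: "((\<lambda>k. C * (2 ^ (Suc k)) ^ m * dl k) \<longlongrightarrow> (0::real)) sequentially"
proof -
  have le: "\<bar>C * (2 ^ (Suc k)) ^ m * dl k\<bar> \<le> \<bar>C\<bar> * (1/2) ^ k" if k: "k \<ge> 2 * m + 2" for k
  proof -
    have n: "k * k = (k * k - Suc k * m) + Suc k * m" and n2: "k * k - Suc k * m \<ge> k"
    proof -
      have "k * k \<ge> (2 * m + 2) * k" using k by (intro mult_right_mono) auto
      moreover have "(2 * m + 2) * k \<ge> Suc k * m + k"
      proof -
        have "m \<le> k * m" using k by simp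
        moreover have "Suc k * m + k = k * m + m + k" by simp
        moreover have "(2 * m + 2) * k = 2 * (k * m) + 2 * k" by (simp add: algebra_simps)
        ultimately show ?thesis by linarith
      qed
      ultimately show "k * k = (k * k - Suc k * m) + Suc k * m" "k * k - Suc k * m \<ge> k" by linarith+
    qed
    have "((2::real) ^ Suc k) ^ m * dl k = (2 ^ (Suc k * m)) * ((1/2) ^ (k * k - Suc k * m) * (1/2) ^ (Suc k * m))"
      unfolding dl_def by (subst n) (simp add: power_add power_mult)
    also have "\<dots> = (1/2) ^ (k * k - Suc k * m) * ((2::real) ^ (Suc k * m) * (1/2) ^ (Suc k * m))"
      by (simp only: mult_ac)
    also have "(2::real) ^ (Suc k * m) * (1/2) ^ (Suc k * m) = 1"
      by (simp only: power_mult_distrib[symmetric]) simp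
    also have "(1/2) ^ (k * k - Suc k * m) * (1::real) = (1/2) ^ (k * k - Suc k * m)" by simp
    also have "\<dots> \<le> (1/2) ^ k" using n2 by (intro power_decreasing) auto
    finally have "((2::real) ^ Suc k) ^ m * dl k \<le> (1/2) ^ k" .
    moreover have "((2::real) ^ Suc k) ^ m * dl k \<ge> 0" by (simp add: dl_def)
    ultimately have X: "((2::real) ^ Suc k) ^ m * dl k \<le> (1/2) ^ k" "0 \<le> ((2::real) ^ Suc k) ^ m * dl k" .
    have "\<bar>C * ((2::real) ^ Suc k) ^ m * dl k\<bar> = \<bar>C\<bar> * (((2::real) ^ Suc k) ^ m * dl k)"
      using X(2) dl_pos[of k] by (simp only: mult.assoc abs_mult) simp
    also have "\<dots> \<le> \<bar>C\<bar> * (1/2) ^ k" using X(1) by (rule mult_left_mono) simp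
    finally show ?thesis .
  qed
  have L: "((\<lambda>k. \<bar>C\<bar> * (1/2::real) ^ k) \<longlongrightarrow> 0) sequentially"
    by (intro tendsto_mult_right_zero LIMSEQ_power_zero) simp
  moreover have EV: "eventually (\<lambda>k. norm (C * (2 ^ (Suc k)) ^ m * dl k) \<le> \<bar>C\<bar> * (1/2::real) ^ k) sequentially"
    using le unfolding eventually_sequentially by auto
  show ?thesis by (rule Lim_null_comparison[OF EV L])
qed

lemma sc_less: "(p::real) > 0 \<Longrightarrow> p * t = q \<Longrightarrow> s < a * t \<Longrightarrow> p * s < a * q"
  by (metis mult.left_commute mult_strict_left_mono)
lemma sc_gr: "(p::real) > 0 \<Longrightarrow> p * t = q \<Longrightarrow> a * t < s \<Longrightarrow> a * q < p * s"
  by (metis mult.left_commute mult_strict_left_mono)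
lemma sc_le: "(p::real) > 0 \<Longrightarrow> p * t = q \<Longrightarrow> s \<le> a * t \<Longrightarrow> p * s \<le> a * q"
  by (metis mult.left_commute mult_left_mono less_imp_le)

lemma two_tau: "(2::real) ^ Suc k * tau k = 2" "(2::real) ^ Suc k * tau (Suc k) = 1"
proof -
  have "(2::real) ^ k * tau k = 1" unfolding tau_def by (simp add: power_mult_distrib[symmetric])
  then show "(2::real) ^ Suc k * tau k = 2" "(2::real) ^ Suc k * tau (Suc k) = 1"
    by (simp_all add: tau_Suc)
qed

lemma agree_chart_local:
  assumes M: "smooth_manifold T d A" and N: "open N" "s \<in> N" and c': "smooth_curve T d A c'"
    and eq: "\<forall>t\<in>N. c t = c' t"
  shows "\<exists>N'. s \<in> N' \<and> chart_local T d A c N'"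
proof -
  obtain N' where N': "s \<in> N'" "chart_local T d A c' N'" using smooth_curve_local[OF M c'] by blast
  have "open N'" using N'(2) chart_local_def by blast
  then have "chart_local T d A c (N \<inter> N')"
    using chart_local_cong[OF N'(2), of "N \<inter> N'" c] N eq by auto
  then show ?thesis using N N' by blast
qed

locale coord =
  fixes T :: "'a topology" and d :: nat and A and xt :: 'a and yt :: "nat \<Rightarrow> 'a"
    and U :: "'a set" and \<phi> :: "'a \<Rightarrow> nat \<Rightarrow> real" and \<rho> :: real and t0 :: nat
  assumes M: "smooth_manifold T d A" and con: "connected_space T"
    and xt: "xt \<in> topspace T" and yt: "\<And>k. yt k \<in> topspace T"
    and UA: "(U, \<phi>) \<in> A" and xU: "xt \<in> U"
    and box: "\<And>w. w \<in> Rn d \<Longrightarrow> (\<forall>j<d. \<bar>w j - \<phi> xt j\<bar> < \<rho>) \<Longrightarrow> w \<in> \<phi> ` U"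
    and close: "\<And>k. t0 < k \<Longrightarrow> yt k \<in> U \<and> (\<forall>j<d. \<bar>\<phi> (yt k) j - \<phi> xt j\<bar> < min \<rho> (dl k))"
begin

definition "ap k = \<phi> (yt (Suc k))"
definition "bp k = \<phi> (yt k)"
definition "G k = (if t0 < k then segc U \<phi> (ap k) (bp k) else (SOME \<gamma>. NC T d A (yt (Suc k)) (yt k) \<gamma>))"
definition "sg k s = (2::real) ^ Suc k * s + (-1)"
definition "cv s = (if s \<le> 0 then xt else if 1 \<le> s then yt 0 else G (kk s) (sg (kk s) s))"
definition "J k = {5/6 * tau (Suc k) <..< tau k + tau (Suc k) / 6}"

lemmas cf = chart_facts[OF M UA]

lemma seg_ok:
  assumes "t0 < k" "0 \<le> t" "t \<le> 1"
  shows "(\<lambda>j. ap k j + t * (bp k j - ap k j)) \<in> \<phi> ` U"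
proof -
  have c1: "yt (Suc k) \<in> U" "\<forall>j<d. \<bar>ap k j - \<phi> xt j\<bar> < \<rho>" using close[of "Suc k"] assms ap_def by auto
  have c2: "yt k \<in> U" "\<forall>j<d. \<bar>bp k j - \<phi> xt j\<bar> < \<rho>" using close[of k] assms bp_def by auto
  have r: "ap k \<in> Rn d" "bp k \<in> Rn d" using cf(3) c1 c2 ap_def bp_def by auto
  from box_convex[OF r c1(2) c2(2) assms(2,3)]
  have 1: "(\<lambda>j. ap k j + t * (bp k j - ap k j)) \<in> Rn d"
    and 2: "\<forall>j<d. \<bar>(\<lambda>j. ap k j + t * (bp k j - ap k j)) j - \<phi> xt j\<bar> < \<rho>" by simp_all
  show ?thesis by (rule box[OF 1]) (use 2 in simp)
qed

lemma G_NC: "NC T d A (yt (Suc k)) (yt k) (G k)"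
proof (cases "t0 < k")
  case True
  have "NC T d A (inv_into U \<phi> (ap k)) (inv_into U \<phi> (bp k)) (segc U \<phi> (ap k) (bp k))"
    using segc_NC(1)[OF M UA seg_ok[OF True]] by blast
  moreover have "yt (Suc k) \<in> U" "yt k \<in> U" using close[of k] close[of "Suc k"] True by auto
  ultimately show ?thesis using True cf(5) G_def ap_def bp_def by (simp add: inv_into_f_f)
next
  case False
  have "\<exists>\<gamma>. NC T d A (yt (Suc k)) (yt k) \<gamma>" using NC_connected[OF M con yt yt] .
  then show ?thesis using False G_def by (simp add: someI_ex)
qed

lemma G_start: "s \<le> 1/3 \<Longrightarrow> G k s = yt (Suc k)" using G_NC unfolding NC_def by blast
lemma G_end: "s \<ge> 2/3 \<Longrightarrow> G k s = yt k" using G_NC unfolding NC_def by blast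
lemma G_smooth: "smooth_curve T d A (G k)" using G_NC unfolding NC_def by blast

lemma G_seg:
  assumes "t0 < k"
  shows "G k \<sigma> \<in> U" "\<phi> (G k \<sigma>) = (\<lambda>j. ap k j + beta \<sigma> * (bp k j - ap k j))"
  using segc_NC(2,3)[OF M UA seg_ok[OF assms]] assms G_def by auto

lemma cv0: "cv 0 = xt" by (simp add: cv_def)

lemma cv_tau: "cv (tau k) = yt k"
proof (cases k)
  case 0 then show ?thesis by (simp add: cv_def tau_0)
next
  case (Suc k')
  have "tau k < 1" using tau_strict[of 0 k] Suc tau_0 by simp
  moreover have "kk (tau k) = k" by (rule kk_unique) (auto intro: tau_strict)
  moreover have "sg k (tau k) = 1" using two_tau(1)[of k] sg_def by simp
  ultimately show ?thesis using tau_pos[of k] G_end[of 1 k] by (simp add: cv_def)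
qed

lemma cv_agree:
  assumes s: "s \<in> J k"
  shows "cv s = G k (sg k s)"
proof -
  have p: "(2::real) ^ Suc k > 0" by simp
  have s1: "5/6 * tau (Suc k) < s" "s < tau k + tau (Suc k) / 6" using s J_def by auto
  have ts: "tau (Suc k) = tau k / 2" by (rule tau_Suc)
  have tp: "tau k > 0" "tau (Suc k) > 0" using tau_pos by auto
  consider "tau (Suc k) < s \<and> s \<le> tau k" | "s \<le> tau (Suc k)" | "tau k < s" by linarith
  then show ?thesis
  proof cases
    case 1
    show ?thesis
    proof (cases "1 \<le> s")
      case True
      then have "k = 0" using 1 tau_le1[of k] tau_strict[of 0 k] tau_0 by (cases k) auto
      then have "s = 1" using 1 True tau_0 by simp
      then show ?thesis using True \<open>k = 0\<close> G_end[of "sg 0 1" 0] by (simp add: cv_def sg_def)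
    next
      case False
      then have "kk s = k" using 1 kk_unique by blast
      then show ?thesis using False 1 tp by (simp add: cv_def)
    qed
  next
    case 2
    have pos: "s > 0" using s1 tp by linarith
    have lt1: "\<not> 1 \<le> s" using 2 tau_le1[of k] ts tp by linarith
    have "tau (Suc (Suc k)) < s" using s1 tau_Suc[of "Suc k"] tp by linarith
    then have kks: "kk s = Suc k" using 2 kk_unique by blast
    have "(2::real) ^ Suc (Suc k) * s > 5/6 * 2"
      by (rule sc_gr[of _ "tau (Suc k)"]) (use two_tau(1)[of "Suc k"] s1 in auto)
    then have "sg (Suc k) s \<ge> 2/3" unfolding sg_def by linarith
    then have "G (Suc k) (sg (Suc k) s) = yt (Suc k)" by (rule G_end)
    moreover have "sg k s \<le> 1/3"
    proof -
      have "(2::real) ^ Suc k * s \<le> 1 * 1"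
        by (rule sc_le[of _ "tau (Suc k)"]) (use two_tau(2)[of k] 2 in auto)
      then show ?thesis unfolding sg_def by linarith
    qed
    then have "G k (sg k s) = yt (Suc k)" by (rule G_start)
    ultimately show ?thesis using pos lt1 kks by (simp add: cv_def)
  next
    case 3
    have pos: "s > 0" using 3 tp by linarith
    have "sg k s \<ge> 2/3"
    proof -
      have "(2::real) ^ Suc k * s > 1 * 2"
        by (rule sc_gr[of _ "tau k"]) (use two_tau(1)[of k] 3 in auto)
      then show ?thesis unfolding sg_def by linarith
    qed
    then have Gk: "G k (sg k s) = yt k" by (rule G_end)
    show ?thesis
    proof (cases k)
      case 0
      then have "1 \<le> s" using 3 tau_0 by simp
      then show ?thesis using Gk pos 0 by (simp add: cv_def)
    next
      case (Suc k')
      have tk': "tau k' = 2 * tau k" using tau_Suc[of k'] Suc by simp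
      have "s < tau k'" using s1 ts tk' tp by linarith
      moreover have "tau (Suc k') < s" using 3 Suc by simp
      ultimately have kks: "kk s = k'" using kk_unique by auto
      have lt1: "\<not> 1 \<le> s" using \<open>s < tau k'\<close> tau_le1[of k'] by linarith
      have "sg k' s \<le> 1/3"
      proof -
        have "s < (13/12) * tau k" using s1 ts by linarith
        then have "(2::real) ^ Suc k' * s < 13/12 * 1"
          by (intro sc_less[of _ "tau k"]) (use two_tau(2)[of k'] Suc in auto)
        then show ?thesis unfolding sg_def by linarith
      qed
      then have "G k' (sg k' s) = yt (Suc k')" by (rule G_start)
      then show ?thesis using Gk pos lt1 kks Suc by (simp add: cv_def)
    qed
  qed
qed

lemma s_in_J:
  assumes "0 < s" "s \<le> 1"
  shows "s \<in> J (kk s)"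
  using kk_spec[OF assms] tau_Suc[of "kk s"] tau_pos[of "kk s"] unfolding J_def by auto

lemma open_J: "open (J k)" unfolding J_def by simp

end

context coord begin

definition "aa = tau (Suc t0)"
definition "pf k j s = (ap k j - \<phi> xt j) + (bp k j - ap k j) * beta (2 ^ Suc k * s + (-1))"
definition "ell j s = \<phi> (cv s) j - \<phi> xt j"

lemma aa_pos: "aa > 0" using tau_pos aa_def by simp

lemma kk_gt_t0:
  assumes "0 < s" "s < aa"
  shows "t0 < kk s" "s < 1"
proof -
  have a1: "aa \<le> 1/2" using tau_le1[of t0] tau_Suc[of t0] aa_def by simp
  then show "s < 1" using assms by linarith
  have "tau (Suc (kk s)) < s" using kk_spec[of s] assms a1 by simp
  show "t0 < kk s"
  proof (rule ccontr)
    assume "\<not> t0 < kk s"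
    then have "tau (Suc t0) \<le> tau (Suc (kk s))" by (intro tau_anti) simp
    then show False using \<open>tau (Suc (kk s)) < s\<close> assms aa_def by simp
  qed
qed

lemma pf_smooth: "smooth_real_on S (pf k j)"
  unfolding pf_def by (intro smooth_add smooth_const smooth_mult smooth_affine beta_smooth)

lemma ell_eq:
  assumes "t0 < k" "s \<in> J k"
  shows "ell j s = pf k j s"
  using cv_agree[OF assms(2)] G_seg(2)[OF assms(1)] unfolding ell_def pf_def sg_def by simp

lemma ell_zero: "s \<le> 0 \<Longrightarrow> ell j s = 0" by (simp add: ell_def cv_def)

lemma ell_smooth_pos: "smooth_real_on {0<..<aa} (ell j)"
proof (rule smooth_local)
  fix s assume s: "s \<in> {0<..<aa}"
  then have k: "t0 < kk s" "s < 1" using kk_gt_t0 by auto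
  define N where "N = J (kk s) \<inter> {0<..<aa}"
  have oN: "open N" using open_J N_def by auto
  have sN: "s \<in> N" using s_in_J[of s] s k N_def by auto
  have "smooth_real_on N (ell j)"
    by (rule smooth_cong[OF oN _ pf_smooth]) (use ell_eq[OF k(1)] N_def in auto)
  then show "\<exists>N. open N \<and> s \<in> N \<and> smooth_real_on N (ell j)" using oN sN by blast
qed simp

lemma ell_Dn_bound:
  assumes Bm: "\<forall>x. \<bar>Dn m beta x\<bar> \<le> Bm" and j: "j < d" and s: "0 < s" "s < aa"
  shows "\<bar>Dn m (ell j) s\<bar> \<le> (3 + 2 * Bm) * (2 ^ Suc (kk s)) ^ m * dl (kk s)"
proof -
  define k where "k = kk s"
  have k: "t0 < k" "s < 1" using kk_gt_t0[OF s] k_def by auto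
  define N where "N = J k \<inter> {0<..<aa}"
  have oN: "open N" using open_J N_def by auto
  have sN: "s \<in> N" using s_in_J[of s] s k N_def k_def by auto
  have "Dn m (ell j) s = Dn m (pf k j) s"
    by (rule Dn_local[OF oN _ sN]) (use ell_eq[OF k(1)] N_def in auto)
  moreover have "\<bar>Dn m (pf k j) s\<bar> \<le> (3 + 2 * Bm) * \<bar>2 ^ Suc k\<bar> ^ m * dl k"
  proof -
    have c1: "\<bar>ap k j - \<phi> xt j\<bar> < dl (Suc k)" using close[of "Suc k"] k j ap_def by auto
    have c2: "\<bar>bp k j - \<phi> xt j\<bar> < dl k" using close[of k] k j bp_def by auto
    have "dl (Suc k) \<le> dl k" by (rule dl_anti) simp
    then have A: "\<bar>ap k j - \<phi> xt j\<bar> < dl k" using c1 by linarith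
    have B: "\<bar>bp k j - ap k j\<bar> < 2 * dl k" using A c2 by linarith
    show ?thesis unfolding pf_def by (rule piece_bound[OF Bm A B])
  qed
  ultimately show ?thesis using k_def by simp
qed

lemma ell_lim:
  assumes j: "j < d"
  shows "(Dn m (ell j) \<longlongrightarrow> 0) (at_right 0)"
  unfolding tendsto_iff
proof (intro allI impI)
  fix e :: real assume e: "e > 0"
  obtain Bm where Bm: "\<forall>x. \<bar>Dn m beta x\<bar> \<le> Bm" using beta_Dn_bound by blast
  have "eventually (\<lambda>k. dist ((3 + 2 * Bm) * (2 ^ Suc k) ^ m * dl k) 0 < e) sequentially"
    using E_lim[of "3 + 2 * Bm" m] e unfolding tendsto_iff by blast
  then obtain K where K: "\<And>k. k \<ge> K \<Longrightarrow> \<bar>(3 + 2 * Bm) * (2 ^ Suc k) ^ m * dl k\<bar> < e"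
    unfolding eventually_sequentially by auto
  show "eventually (\<lambda>s. dist (Dn m (ell j) s) 0 < e) (at_right 0)"
    unfolding eventually_at_right_field
  proof (intro exI[of _ "min aa (tau K)"] conjI allI impI)
    show "0 < min aa (tau K)" using aa_pos tau_pos by simp
    fix s :: real assume s: "0 < s" "s < min aa (tau K)"
    have k: "t0 < kk s" "s < 1" using kk_gt_t0[of s] s by auto
    have "tau (Suc (kk s)) < s" using kk_spec[of s] s k by simp
    then have "K \<le> kk s"
    proof -
      have "\<not> Suc (kk s) \<le> K"
      proof
        assume "Suc (kk s) \<le> K"
        then have "tau K \<le> tau (Suc (kk s))" by (rule tau_anti)
        then show False using \<open>tau (Suc (kk s)) < s\<close> s by simp
      qed
      then show ?thesis by simp
    qed
    then have "\<bar>(3 + 2 * Bm) * (2 ^ Suc (kk s)) ^ m * dl (kk s)\<bar> < e" by (rule K)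
    moreover have "\<bar>Dn m (ell j) s\<bar> \<le> (3 + 2 * Bm) * (2 ^ Suc (kk s)) ^ m * dl (kk s)"
      using ell_Dn_bound[OF Bm j] s by simp
    ultimately show "dist (Dn m (ell j) s) 0 < e" by (simp add: dist_real_def)
  qed
qed

lemma chart_local0: "chart_local T d A cv {..<aa}"
  unfolding chart_local_def
proof (intro conjI exI[of _ U] exI[of _ \<phi>] allI impI)
  show "open {..<aa}" by simp
  show "(U, \<phi>) \<in> A" by (rule UA)
  show "cv ` {..<aa} \<subseteq> U"
  proof
    fix y assume "y \<in> cv ` {..<aa}"
    then obtain s where s: "s < aa" "y = cv s" by auto
    show "y \<in> U"
    proof (cases "s \<le> 0")
      case True then show ?thesis using s xU cv_def by simp
    next
      case False
      then have k: "t0 < kk s" "s < 1" using kk_gt_t0[of s] s by auto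
      then show ?thesis using s False G_seg(1)[OF k(1)] by (simp add: cv_def)
    qed
  qed
  fix j assume j: "j < d"
  have "smooth_real_on {..<aa} (ell j)"
    by (rule flat[OF aa_pos ell_zero ell_smooth_pos ell_lim[OF j]])
  then have "smooth_real_on {..<aa} (\<lambda>s. ell j s + \<phi> xt j)" by (intro smooth_add smooth_const)
  then show "smooth_real_on {..<aa} (\<lambda>s. \<phi> (cv s) j)" by (simp add: ell_def)
qed

lemma cv_smooth: "smooth_curve T d A cv"
proof (rule key_smooth_curve[OF M])
  fix s :: real
  consider "s < aa" | "0 < s \<and> s \<le> 1" | "1 < s" using aa_pos by linarith
  then show "\<exists>N. s \<in> N \<and> chart_local T d A cv N"
  proof cases
    case 1 then show ?thesis using chart_local0 by blast
  next
    case 2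
    then have sJ: "s \<in> J (kk s)" using s_in_J by blast
    have "smooth_curve T d A (\<lambda>t. G (kk s) (2 ^ Suc (kk s) * t + (-1)))"
      by (rule smooth_curve_affine[OF M G_smooth])
    moreover have "\<forall>t\<in>J (kk s). cv t = G (kk s) (2 ^ Suc (kk s) * t + (-1))"
      using cv_agree sg_def by simp
    ultimately show ?thesis using agree_chart_local[OF M open_J sJ] by blast
  next
    case 3
    have "smooth_curve T d A (\<lambda>_. yt 0)" by (rule smooth_curve_const[OF M yt])
    moreover have "\<forall>t\<in>{1<..}. cv t = yt 0" by (simp add: cv_def)
    ultimately show ?thesis using agree_chart_local[OF M open_greaterThan, of s] 3 by auto
  qed
qed

lemma coord_curve: "\<exists>c. smooth_curve T d A c \<and> c 0 = xt \<and> (\<forall>k. c (tau k) = yt k)"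
  using cv_smooth cv0 cv_tau by blast

end

lemma cont_from_nbhd:
  fixes f :: "'b \<Rightarrow> real"
  assumes "\<And>x e. x \<in> topspace X \<Longrightarrow> e > 0 \<Longrightarrow> \<exists>W. openin X W \<and> x \<in> W \<and> (\<forall>y\<in>W. \<bar>f y - f x\<bar> < e)"
  shows "continuous_map X euclideanreal f"
  unfolding continuous_map_def
proof (intro conjI allI impI)
  show "f \<in> topspace X \<rightarrow> topspace euclideanreal" by simp
  fix V assume V: "openin euclideanreal V"
  show "openin X {x \<in> topspace X. f x \<in> V}"
  proof (rule openin_subopen[THEN iffD2], rule ballI)
    fix x assume x: "x \<in> {x \<in> topspace X. f x \<in> V}"
    have oV: "open V" by (subst open_openin) (rule V)
    have fx: "f x \<in> V" using x by simp
    obtain e where e: "e > 0" "ball (f x) e \<subseteq> V"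
      using open_contains_ball[THEN iffD1, OF oV] fx by blast
    have xX: "x \<in> topspace X" using x by simp
    obtain W where W: "openin X W" "x \<in> W" "\<forall>y\<in>W. \<bar>f y - f x\<bar> < e" using assms[OF xX e(1)] by blast
    have "W \<subseteq> {x \<in> topspace X. f x \<in> V}"
    proof
      fix y assume y: "y \<in> W"
      then have "\<bar>f y - f x\<bar> < e" using W by blast
      then have "f y \<in> ball (f x) e" by (simp add: dist_real_def abs_minus_commute)
      then show "y \<in> {x \<in> topspace X. f x \<in> V}" using y W(1) openin_subset e by blast
    qed
    then show "\<exists>T. openin X T \<and> x \<in> T \<and> T \<subseteq> {x \<in> topspace X. f x \<in> V}" using W by blast
  qed
qed

theorem lemma9:
  fixes T :: "nat \<Rightarrow> 'a topology"
    and d :: "nat \<Rightarrow> nat"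
    and A :: "nat \<Rightarrow> ('a set \<times> ('a \<Rightarrow> nat \<Rightarrow> real)) set"
    and f :: "(nat \<Rightarrow> 'a) \<Rightarrow> real"
  assumes "\<And>n. smooth_manifold (T n) (d n) (A n)"
    and "\<And>n. connected_space (T n)"
    and "f \<in> Cinf_prod T d A"
  shows "continuous_map (product_topology T UNIV) euclideanreal f"
proof (rule cont_from_nbhd)
  note M = assms(1) and con = assms(2)
  fix x e assume x: "x \<in> topspace (product_topology T UNIV)" and e: "(e::real) > 0"
  let ?P = "product_topology T UNIV"
  have xt: "x t \<in> topspace (T t)" for t using x by (simp add: PiE_iff)
  show "\<exists>W. openin ?P W \<and> x \<in> W \<and> (\<forall>y\<in>W. \<bar>f y - f x\<bar> < e)"
  proof (rule ccontr)
    assume H: "\<not> ?thesis"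
    have "\<forall>t. \<exists>U \<phi>. (U, \<phi>) \<in> A t \<and> x t \<in> U"
    proof
      fix t
      have "x t \<in> \<Union>(fst ` A t)" using M[of t] xt[of t] unfolding smooth_manifold_def by blast
      then show "\<exists>U \<phi>. (U, \<phi>) \<in> A t \<and> x t \<in> U" by force
    qed
    then obtain Uc \<phi>c where UA: "\<And>t. (Uc t, \<phi>c t) \<in> A t" and xU: "\<And>t. x t \<in> Uc t" by metis
    have "\<forall>t. \<exists>\<rho>>0. \<forall>w\<in>Rn (d t). (\<forall>j<d t. \<bar>w j - \<phi>c t (x t) j\<bar> < \<rho>) \<longrightarrow> w \<in> \<phi>c t ` Uc t"
    proof
      fix t
      show "\<exists>\<rho>>0. \<forall>w\<in>Rn (d t). (\<forall>j<d t. \<bar>w j - \<phi>c t (x t) j\<bar> < \<rho>) \<longrightarrow> w \<in> \<phi>c t ` Uc t"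
        using openin_Rn_box[OF chart_facts(4)[OF M UA[of t]], of "\<phi>c t (x t)"] xU[of t] by blast
    qed
    then obtain \<rho>c where \<rho>c: "\<And>t. \<rho>c t > 0"
      "\<And>t w. w \<in> Rn (d t) \<Longrightarrow> (\<forall>j<d t. \<bar>w j - \<phi>c t (x t) j\<bar> < \<rho>c t) \<Longrightarrow> w \<in> \<phi>c t ` Uc t"
      by metis
    define B where "B t k = {p \<in> Uc t. \<forall>j<d t. \<bar>\<phi>c t p j - \<phi>c t (x t) j\<bar> < min (\<rho>c t) (dl k)}" for t k
    define W where "W k = (\<Inter>t\<in>{..<k}. {y \<in> topspace ?P. y t \<in> B t k}) \<inter> topspace ?P" for k
    have oW: "openin ?P (W k)" for k
      unfolding W_def
    proof (rule openin_INT)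
      fix t assume "t \<in> {..<k}"
      have "openin (T t) (B t k)" unfolding B_def by (rule chart_box_open[OF M UA])
      moreover have "continuous_map ?P (T t) (\<lambda>y. y t)" by (rule continuous_map_product_projection) simp
      ultimately show "openin ?P {y \<in> topspace ?P. y t \<in> B t k}"
        using openin_continuous_map_preimage by blast
    qed simp
    have xW: "x \<in> W k" for k
      unfolding W_def B_def using x xU \<rho>c(1) dl_pos by auto
    have "\<forall>k. \<exists>y. y \<in> W k \<and> \<not> \<bar>f y - f x\<bar> < e" using H oW xW by blast
    then obtain y where yW: "\<And>k. y k \<in> W k" and ye: "\<And>k. \<not> \<bar>f (y k) - f x\<bar> < e" by metis
    have ytop: "y k t \<in> topspace (T t)" for k t
      using yW[of k] unfolding W_def by (auto simp: PiE_iff)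
    have "\<forall>t. \<exists>c. smooth_curve (T t) (d t) (A t) c \<and> c 0 = x t \<and> (\<forall>k. c (tau k) = y k t)"
    proof
      fix t
      have "coord (T t) (d t) (A t) (x t) (\<lambda>k. y k t) (Uc t) (\<phi>c t) (\<rho>c t) t"
      proof
        show "smooth_manifold (T t) (d t) (A t)" by (rule M)
        show "connected_space (T t)" by (rule con)
        show "x t \<in> topspace (T t)" by (rule xt)
        show "\<And>k. y k t \<in> topspace (T t)" by (rule ytop)
        show "(Uc t, \<phi>c t) \<in> A t" by (rule UA)
        show "x t \<in> Uc t" by (rule xU)
        show "\<And>w. w \<in> Rn (d t) \<Longrightarrow> \<forall>j<d t. \<bar>w j - \<phi>c t (x t) j\<bar> < \<rho>c t \<Longrightarrow> w \<in> \<phi>c t ` Uc t"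
          by (rule \<rho>c(2))
        fix k assume "t < k"
        then have "y k t \<in> B t k" using yW[of k] unfolding W_def by auto
        then show "y k t \<in> Uc t \<and> (\<forall>j<d t. \<bar>\<phi>c t (y k t) j - \<phi>c t (x t) j\<bar> < min (\<rho>c t) (dl k))"
          unfolding B_def by blast
      qed
      then show "\<exists>c. smooth_curve (T t) (d t) (A t) c \<and> c 0 = x t \<and> (\<forall>k. c (tau k) = y k t)"
        by (rule coord.coord_curve)
    qed
    then obtain cc where cc: "\<And>t. smooth_curve (T t) (d t) (A t) (cc t)" "\<And>t. cc t 0 = x t"
      "\<And>t k. cc t (tau k) = y k t" by metis
    define C where "C s t = cc t s" for s t
    have "structure_curve T d A C" unfolding structure_curve_def C_def using cc(1) by (simp add: eta_contract_eq)
    then have "smooth_real_on UNIV (f \<circ> C)" using assms(3) unfolding Cinf_prod_def by blast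
    then have "continuous_on UNIV (f \<circ> C)" by (rule smooth_cont)
    then have "isCont (f \<circ> C) 0" by (simp add: continuous_on_eq_continuous_at comp_def)
    from isCont_tendsto_compose[OF this tau_lim]
    have "(\<lambda>k. (f \<circ> C) (tau k)) \<longlonglongrightarrow> (f \<circ> C) 0" .
    moreover have "C (tau k) = y k" for k unfolding C_def using cc(3) by auto
    moreover have "C 0 = x" unfolding C_def using cc(2) by auto
    ultimately have "(\<lambda>k. f (y k)) \<longlonglongrightarrow> f x" by simp
    then have "eventually (\<lambda>k. dist (f (y k)) (f x) < e) sequentially" using e unfolding tendsto_iff by blast
    then obtain k where "dist (f (y k)) (f x) < e" using eventually_sequentially by auto
    then show False using ye[of k] by (simp add: dist_real_def)
  qed
qed

end
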